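(* Let $(X_1,X_2)$ and $(Y_1,Y_2)$ be two pairs of compatible complex Banach spaces such that $X_1\cap X_2$ is dense in both $X_1$ and $X_2$, $Y_1\cap Y_2$ is dense in both $Y_1$ and $Y_2$, and $Y_2$ is reflexive. Let $O\subseteq\mathbb{C}$ be open and $f:O\to\mathcal L(X_1,Y_1)$ holomorphic. If there is $C<\infty$ with $$\|f(z)x\|_{Y_2}\le C\|x\|_{X_2}\qquad(z\in O,\ x\in X_1\cap X_2),$$ then each $f(z)$ extends from $X_1\cap X_2$ to a bounded operator $X_2\to Y_2$ (also denoted $f(z)$), and $f:O\to\mathcal L(X_2,Y_2)$ is holomorphic.
   Context: Two Banach spaces are called compatible if they are both continuously included in the same Hausdorff topological vector space. Holomorphy of operator-valued maps is with respect to the operator norm. *)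

theory Defs
  imports "HOL-Analysis.Analysis"
begin

class scaleC = scaleR +
  fixes scaleC :: "complex \<Rightarrow> 'a \<Rightarrow> 'a"
  assumes scaleR_scaleC: "scaleR r x = scaleC (of_real r) x"

class complex_vector = scaleC + real_vector +
  assumes scaleC_add_right: "scaleC a (x + y) = scaleC a x + scaleC a y"
    and scaleC_add_left: "scaleC (a + b) x = scaleC a x + scaleC b x"
    and scaleC_scaleC: "scaleC a (scaleC b x) = scaleC (a * b) x"
    and scaleC_one: "scaleC 1 x = x"

class complex_normed_vector = complex_vector + real_normed_vector +
  assumes norm_scaleC: "norm (scaleC a x) = cmod a * norm x"

class complex_banach = complex_normed_vector + complete_space

definition complex_tvs :: "'a::{complex_vector, t2_space} itself \<Rightarrow> bool" where
  "complex_tvs _ \<longleftrightarrow>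
     continuous_on UNIV (\<lambda>p::'a \<times> 'a. fst p + snd p) \<and>
     continuous_on UNIV (\<lambda>p::complex \<times> 'a. scaleC (fst p) (snd p))"

instantiation complex :: complex_banach
begin
definition scaleC_complex_def: "scaleC (a::complex) (x::complex) = a * x"
instance
  by standard (auto simp: scaleC_complex_def scaleR_conv_of_real algebra_simps norm_mult)
end

definition clinear :: "('a::complex_vector \<Rightarrow> 'b::complex_vector) \<Rightarrow> bool" where
  "clinear f \<longleftrightarrow> (\<forall>x y. f (x + y) = f x + f y) \<and> (\<forall>c x. f (scaleC c x) = scaleC c (f x))"

definition cdual :: "'a::complex_normed_vector itself \<Rightarrow> ('a \<Rightarrow> complex) set" where
  "cdual _ = {\<phi>. clinear \<phi> \<and> bounded_linear \<phi>}"

text \<open>Reflexivity: the canonical embedding into the bidual is surjective, i.e. every bounded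
  complex-linear functional on the dual is evaluation at some point.\<close>
definition creflexive :: "'a::complex_normed_vector itself \<Rightarrow> bool" where
  "creflexive T \<longleftrightarrow>
     (\<forall>\<Phi> :: ('a \<Rightarrow> complex) \<Rightarrow> complex.
        ((\<forall>\<phi>\<in>cdual T. \<forall>\<psi>\<in>cdual T. \<Phi> (\<lambda>y. \<phi> y + \<psi> y) = \<Phi> \<phi> + \<Phi> \<psi>) \<and>
         (\<forall>\<phi>\<in>cdual T. \<forall>c. \<Phi> (\<lambda>y. c * \<phi> y) = c * \<Phi> \<phi>) \<and>
         (\<exists>K. \<forall>\<phi>\<in>cdual T. cmod (\<Phi> \<phi>) \<le> K * onorm \<phi>))
        \<longrightarrow> (\<exists>y. \<forall>\<phi>\<in>cdual T. \<Phi> \<phi> = \<phi> y))"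

definition cscale_blinfun :: "complex \<Rightarrow> ('a::complex_normed_vector \<Rightarrow>\<^sub>L 'b::complex_normed_vector)
    \<Rightarrow> ('a \<Rightarrow>\<^sub>L 'b)" where
  "cscale_blinfun c T = Blinfun (\<lambda>x. scaleC c (blinfun_apply T x))"

definition op_holomorphic_on ::
  "(complex \<Rightarrow> ('a::complex_normed_vector \<Rightarrow>\<^sub>L 'b::complex_normed_vector)) \<Rightarrow> complex set \<Rightarrow> bool" where
  "op_holomorphic_on f U \<longleftrightarrow>
     (\<forall>z\<in>U. \<exists>D. clinear (blinfun_apply D) \<and>
        ((\<lambda>w. norm (f w - f z - cscale_blinfun (w - z) D) / cmod (w - z)) \<longlongrightarrow> 0) (at z))"

text \<open>Compatible pair: both spaces continuously (complex-linearly, injectively) included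
  in a common Hausdorff topological vector space.\<close>
definition continuous_inclusion :: "('a::complex_banach \<Rightarrow> 'v::{complex_vector,t2_space}) \<Rightarrow> bool" where
  "continuous_inclusion j \<longleftrightarrow> clinear j \<and> inj j \<and> continuous_on UNIV j"

end

theory Submission
  imports Defs "HOL-Complex_Analysis.Complex_Analysis"
begin

definition domg :: "real \<Rightarrow> ('a::real_normed_vector \<times> real) set \<Rightarrow> bool" where
  "domg K G \<longleftrightarrow> subspace G \<and> (\<forall>x a b. (x,a)\<in>G \<longrightarrow> (x,b)\<in>G \<longrightarrow> a=b)
     \<and> (\<forall>x a. (x,a)\<in>G \<longrightarrow> a \<le> K * norm x)"

lemma domg_ext:
  fixes G :: "('a::real_normed_vector \<times> real) set"
  assumes dG: "domg K G" and v: "v \<notin> fst ` G"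
    and c: "\<And>d a. (d,a)\<in>G \<Longrightarrow> a - K * norm (d - v) \<le> c \<and> c \<le> K * norm (d + v) - a"
  shows "domg K (span (insert (v,c) G))"
proof -
  have sG: "subspace G" and fG: "\<And>x a b. (x,a)\<in>G \<Longrightarrow> (x,b)\<in>G \<Longrightarrow> a=b"
    and bG: "\<And>x a. (x,a)\<in>G \<Longrightarrow> a \<le> K * norm x" using dG by (auto simp: domg_def)
  have spG: "span G = G" using sG by simp
  have mem: "\<exists>t d a. (d,a)\<in>G \<and> x = t *\<^sub>R v + d \<and> \<alpha> = t * c + a"
    if "(x,\<alpha>) \<in> span (insert (v,c) G)" for x \<alpha>
  proof -
    from that obtain k where "(x,\<alpha>) - k *\<^sub>R (v,c) \<in> G"
      unfolding span_insert spG by auto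
    then show ?thesis by (intro exI[of _ k] exI[of _ "x - k *\<^sub>R v"] exI[of _ "\<alpha> - k * c"]) auto
  qed
  have scl: "(r *\<^sub>R d, r * a) \<in> G" if "(d,a)\<in>G" for r d a
    using sG that subspace_scale[OF sG that, of r] by simp
  show ?thesis unfolding domg_def
  proof (intro conjI allI impI)
    show "subspace (span (insert (v, c) G))" by (rule subspace_span)
  next
    fix x a b assume xa: "(x,a) \<in> span (insert (v, c) G)" and xb: "(x,b) \<in> span (insert (v, c) G)"
    have "(x,a) - (x,b) \<in> span (insert (v, c) G)" using span_diff[OF xa xb] .
    hence "(0, a - b) \<in> span (insert (v, c) G)" by simp
    from mem[OF this] obtain t d e where de: "(d,e)\<in>G" and 0: "0 = t *\<^sub>R v + d" and ab: "a - b = t * c + e"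
      by blast
    show "a = b"
    proof (cases "t = 0")
      case True
      then have "(0, a-b) \<in> G" using de 0 ab by simp
      moreover have "(0,0) \<in> G" using subspace_0[OF sG] by (simp add: zero_prod_def)
      ultimately show ?thesis using fG by force
    next
      case False
      have "d = - (t *\<^sub>R v)" using 0 by (simp add: eq_neg_iff_add_eq_0 add.commute)
      hence "(-(1/t)) *\<^sub>R d = v" using False by simp
      then have "v \<in> fst ` G" using scl[OF de, of "-(1/t)"] by force
      with v show ?thesis by simp
    qed
  next
    fix x a assume xa: "(x,a) \<in> span (insert (v, c) G)"
    from mem[OF this] obtain t d e where de: "(d,e)\<in>G" and x: "x = t *\<^sub>R v + d" and a: "a = t * c + e"
      by blast
    consider "t = 0" | "t > 0" | "t < 0" by linarith
    then show "a \<le> K * norm x"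
    proof cases
      case 1 then show ?thesis using bG[OF de] x a by simp
    next
      case 2
      have "c \<le> K * norm ((1/t) *\<^sub>R d + v) - (1/t) * e" using c[OF scl[OF de, of "1/t"]] by simp
      hence "t * c \<le> t * (K * norm ((1/t) *\<^sub>R d + v) - (1/t) * e)" using 2 by simp
      also have "\<dots> = K * (t * norm ((1/t) *\<^sub>R d + v)) - e" using 2 by (simp add: algebra_simps)
      also have "t * norm ((1/t) *\<^sub>R d + v) = norm (t *\<^sub>R ((1/t) *\<^sub>R d + v))" using 2 by simp
      also have "t *\<^sub>R ((1/t) *\<^sub>R d + v) = x" using 2 x by (simp add: scaleR_add_right)
      finally show ?thesis using a by simp
    next
      case 3
      define s where "s = -t"
      have s: "s > 0" using 3 s_def by simp
      have "(1/s) * e - K * norm ((1/s) *\<^sub>R d - v) \<le> c" using c[OF scl[OF de, of "1/s"]] by simp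
      hence "s * ((1/s) * e - K * norm ((1/s) *\<^sub>R d - v)) \<le> s * c" using s by (simp add: mult_left_mono)
      moreover have "s * ((1/s) * e - K * norm ((1/s) *\<^sub>R d - v)) = e - K * (s * norm ((1/s) *\<^sub>R d - v))"
        using s by (simp add: algebra_simps)
      moreover have "s * norm ((1/s) *\<^sub>R d - v) = norm (s *\<^sub>R ((1/s) *\<^sub>R d - v))" using s by simp
      moreover have "s *\<^sub>R ((1/s) *\<^sub>R d - v) = x" using s x s_def by (simp add: scaleR_diff_right)
      ultimately have "e - K * norm x \<le> s * c" by simp
      thus ?thesis using a s_def by (simp add: algebra_simps)
    qed
  qed
qed

lemma domg_ext_exists:
  fixes G :: "('a::real_normed_vector \<times> real) set"
  assumes dG: "domg K G" and v: "v \<notin> fst ` G" and K: "K \<ge> 0"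
  shows "\<exists>c. domg K (span (insert (v,c) G))"
proof -
  have sG: "subspace G" and bG: "\<And>x a. (x,a)\<in>G \<Longrightarrow> a \<le> K * norm x" using dG by (auto simp: domg_def)
  have addG: "(d1 + d2, a1 + a2) \<in> G" if "(d1,a1)\<in>G" "(d2,a2)\<in>G" for d1 d2 a1 a2
    using subspace_add[OF sG that] by simp
  define A where "A = {a - K * norm (d - v) | d a. (d,a) \<in> G}"
  have G0: "(0,0) \<in> G" using subspace_0[OF sG] by (simp add: zero_prod_def)
  have key: "a1 - K * norm (d1 - v) \<le> K * norm (d2 + v) - a2" if "(d1,a1)\<in>G" "(d2,a2)\<in>G" for d1 d2 a1 a2
  proof -
    have "a1 + a2 \<le> K * norm (d1 + d2)" using bG[OF addG[OF that]] .
    also have "\<dots> \<le> K * (norm (d1 - v) + norm (d2 + v))"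
    proof -
      have "norm (d1 + d2) \<le> norm (d1 - v) + norm (d2 + v)"
      proof -
        have "d1 + d2 = (d1 - v) + (d2 + v)" by simp
        thus ?thesis using norm_triangle_ineq[of "d1 - v" "d2 + v"] by simp
      qed
      thus ?thesis using K by (simp add: mult_left_mono)
    qed
    finally show ?thesis by (simp add: algebra_simps)
  qed
  have Ane: "A \<noteq> {}" using G0 unfolding A_def by blast
  have Abd: "bdd_above A" unfolding bdd_above_def
  proof (intro exI ballI)
    fix y assume "y \<in> A"
    then obtain d a where "(d,a)\<in>G" "y = a - K * norm (d - v)" unfolding A_def by blast
    then show "y \<le> K * norm (0 + v) - 0" using key[OF _ G0] by simp
  qed
  define c where "c = Sup A"
  have "domg K (span (insert (v,c) G))"
  proof (rule domg_ext[OF dG v])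
    fix d a assume da: "(d,a) \<in> G"
    show "a - K * norm (d - v) \<le> c \<and> c \<le> K * norm (d + v) - a"
    proof
      have "a - K * norm (d - v) \<in> A" using da unfolding A_def by blast
      then show "a - K * norm (d - v) \<le> c" unfolding c_def using Abd by (rule cSup_upper)
      show "c \<le> K * norm (d + v) - a" unfolding c_def
      proof (rule cSup_least[OF Ane])
        fix y assume "y \<in> A"
        then obtain d' a' where "(d',a')\<in>G" "y = a' - K * norm (d' - v)" unfolding A_def by blast
        then show "y \<le> K * norm (d + v) - a" using key[OF _ da] by simp
      qed
    qed
  qed
  thus ?thesis by blast
qed

lemma domg_union_chain:
  assumes ne: "\<C> \<noteq> {}" and ch: "subset.chain {G. domg K G \<and> G0 \<subseteq> G} \<C>"
  shows "domg K (\<Union>\<C>) \<and> G0 \<subseteq> \<Union>\<C>"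
proof -
  have C: "\<And>G. G \<in> \<C> \<Longrightarrow> domg K G \<and> G0 \<subseteq> G" and
    tot: "\<And>X Y. X \<in> \<C> \<Longrightarrow> Y \<in> \<C> \<Longrightarrow> X \<subseteq> Y \<or> Y \<subseteq> X"
    using ch unfolding subset_chain_def by blast+
  have two: "\<exists>G\<in>\<C>. p \<in> G \<and> q \<in> G" if P: "p \<in> \<Union>\<C>" "q \<in> \<Union>\<C>" for p q
  proof -
    obtain X Y where "X\<in>\<C>" "Y\<in>\<C>" "p\<in>X" "q\<in>Y" using P by blast
    then show ?thesis using tot[of X Y] by blast
  qed
  obtain G1 where G1: "G1 \<in> \<C>" using ne by blast
  have "subspace (\<Union>\<C>)" unfolding subspace_def
  proof (intro conjI ballI allI)
    show "0 \<in> \<Union>\<C>" using C[OF G1] G1 subspace_0[of G1] unfolding domg_def by blast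
  next
    fix p q assume "p \<in> \<Union>\<C>" "q \<in> \<Union>\<C>"
    then obtain G where "G\<in>\<C>" "p\<in>G" "q\<in>G" using two by blast
    then show "p + q \<in> \<Union>\<C>" using C[of G] subspace_add[of G p q] unfolding domg_def by blast
  next
    fix c :: real and p assume "p \<in> \<Union>\<C>"
    then obtain G where "G\<in>\<C>" "p\<in>G" by blast
    then show "c *\<^sub>R p \<in> \<Union>\<C>" using C[of G] subspace_scale[of G p c] unfolding domg_def by blast
  qed
  moreover have "a = b" if P: "(x,a) \<in> \<Union>\<C>" "(x,b) \<in> \<Union>\<C>" for x a b
  proof -
    obtain G where "G\<in>\<C>" "(x,a)\<in>G" "(x,b)\<in>G" using two[OF P] by blast
    then show ?thesis using C[of G] unfolding domg_def by blast
  qed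
  moreover have "a \<le> K * norm x" if "(x,a) \<in> \<Union>\<C>" for x a
    using that C unfolding domg_def by blast
  moreover have "G0 \<subseteq> \<Union>\<C>" using C[OF G1] G1 by blast
  ultimately show ?thesis unfolding domg_def by blast
qed

lemma HB_graph:
  fixes G0 :: "('a::real_normed_vector \<times> real) set"
  assumes d0: "domg K G0" and K: "K \<ge> 0"
  shows "\<exists>h. linear h \<and> (\<forall>x. h x \<le> K * norm x) \<and> (\<forall>x a. (x,a) \<in> G0 \<longrightarrow> h x = a)"
proof -
  define \<A> where "\<A> = {G. domg K G \<and> G0 \<subseteq> G}"
  have "\<exists>M\<in>\<A>. \<forall>X\<in>\<A>. M \<subseteq> X \<longrightarrow> X = M"
  proof (rule subset_Zorn_nonempty)
    show "\<A> \<noteq> {}" using d0 unfolding \<A>_def by blast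
    fix \<C> assume "\<C> \<noteq> {}" "subset.chain \<A> \<C>"
    then show "\<Union>\<C> \<in> \<A>" using domg_union_chain[of \<C> K G0] unfolding \<A>_def by blast
  qed
  then obtain M where MA: "M \<in> \<A>" and maxA: "\<forall>X\<in>\<A>. M \<subseteq> X \<longrightarrow> X = M" by blast
  have M: "domg K M" "G0 \<subseteq> M" using MA unfolding \<A>_def by auto
  have max: "X = M" if "domg K X" "G0 \<subseteq> X" "M \<subseteq> X" for X
  proof -
    have "X \<in> \<A>" using that(1,2) unfolding \<A>_def by simp
    thus ?thesis using maxA that(3) by blast
  qed
  have sM: "subspace M" and fM: "\<And>x a b. (x,a)\<in>M \<Longrightarrow> (x,b)\<in>M \<Longrightarrow> a=b"
    and bM: "\<And>x a. (x,a)\<in>M \<Longrightarrow> a \<le> K * norm x" using M(1) by (auto simp: domg_def)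
  have full: "\<exists>a. (x,a) \<in> M" for x
  proof (rule ccontr)
    assume "\<nexists>a. (x, a) \<in> M"
    hence nx: "x \<notin> fst ` M" by (auto simp: image_iff)
    obtain c where dc: "domg K (span (insert (x,c) M))" using domg_ext_exists[OF M(1) nx K] by blast
    have sub: "M \<subseteq> span (insert (x,c) M)" using span_superset[of "insert (x,c) M"] by blast
    have "(x,c) \<in> span (insert (x,c) M)" by (simp add: span_base)
    moreover have "span (insert (x,c) M) = M" using max[OF dc] sub M(2) by blast
    ultimately have "(x,c) \<in> M" by simp
    then have "x \<in> fst ` M" by (rule image_eqI[rotated]) simp
    then show False using nx by blast
  qed
  define h where "h x = (THE a. (x,a) \<in> M)" for x
  have hM: "(x, h x) \<in> M" for x
  proof -
    obtain a where "(x,a)\<in>M" using full by blast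
    moreover have "\<And>b. (x,b)\<in>M \<Longrightarrow> b = a" using fM \<open>(x,a)\<in>M\<close> by blast
    ultimately have "(x, THE a. (x,a) \<in> M) \<in> M" by (rule theI)
    then show ?thesis unfolding h_def .
  qed
  have hu: "(x,a) \<in> M \<Longrightarrow> h x = a" for x a using fM hM by blast
  have "linear h"
  proof (rule linearI)
    fix x y show "h (x + y) = h x + h y"
      using hu[of "x+y" "h x + h y"] subspace_add[OF sM hM[of x] hM[of y]] by simp
  next
    fix r :: real and x show "h (r *\<^sub>R x) = r *\<^sub>R h x"
      using hu[of "r *\<^sub>R x" "r * h x"] subspace_scale[OF sM hM[of x], of r] by simp
  qed
  moreover have "\<forall>x. h x \<le> K * norm x" using bM hM by blast
  moreover have "\<forall>x a. (x,a) \<in> G0 \<longrightarrow> h x = a" using hu M(2) by blast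
  ultimately show ?thesis by blast
qed

lemma real_separation:
  fixes M :: "'a::real_normed_vector set"
  assumes sM: "subspace M" and cM: "closed M" and v: "v \<notin> M"
  shows "\<exists>h. linear h \<and> h v = 1 \<and> (\<forall>m\<in>M. h m = 0) \<and> (\<forall>x. \<bar>h x\<bar> \<le> norm x / infdist v M)"
proof -
  have M0: "0 \<in> M" using sM subspace_0 by blast
  have dpos: "infdist v M > 0"
  proof -
    have "M \<noteq> {}" using M0 by blast
    hence "infdist v M \<noteq> 0" using in_closed_iff_infdist_zero[OF cM] v by blast
    thus ?thesis using infdist_nonneg[of v M] by linarith
  qed
  define K where "K = 1 / infdist v M"
  have K: "K \<ge> 0" using dpos K_def by simp
  define G where "G = (\<lambda>m. (m, 0::real)) ` M"
  have sG: "subspace G" unfolding G_def subspace_def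
  proof (intro conjI ballI allI)
    show "0 \<in> (\<lambda>m. (m, 0::real)) ` M" using M0 by (force simp: zero_prod_def)
  next
    fix p q assume "p \<in> (\<lambda>m. (m, 0::real)) ` M" "q \<in> (\<lambda>m. (m, 0::real)) ` M"
    then show "p + q \<in> (\<lambda>m. (m, 0::real)) ` M" using subspace_add[OF sM] by force
  next
    fix c :: real and p assume "p \<in> (\<lambda>m. (m, 0::real)) ` M"
    then show "c *\<^sub>R p \<in> (\<lambda>m. (m, 0::real)) ` M" using subspace_scale[OF sM] by force
  qed
  have dG: "domg K G" unfolding domg_def using sG K by (auto simp: G_def)
  have vG: "v \<notin> fst ` G" using v by (force simp: G_def)
  have "domg K (span (insert (v,1) G))"
  proof (rule domg_ext[OF dG vG])
    fix d a assume "(d,a) \<in> G"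
    then have a: "a = 0" and d: "d \<in> M" by (auto simp: G_def)
    have "-d \<in> M" using d sM by (simp add: subspace_neg)
    hence "infdist v M \<le> dist v (-d)" by (rule infdist_le)
    also have "dist v (-d) = norm (d + v)" by (simp add: dist_norm add.commute)
    finally have "infdist v M \<le> norm (d + v)" .
    hence "1 \<le> K * norm (d + v)" using dpos unfolding K_def by (simp add: divide_simps)
    moreover have "0 \<le> K * norm (d - v)" using K by simp
    ultimately show "a - K * norm (d - v) \<le> 1 \<and> 1 \<le> K * norm (d + v) - a" using a by simp
  qed
  from HB_graph[OF this K] obtain h where h: "linear h" "\<And>x. h x \<le> K * norm x"
    "\<And>x a. (x,a) \<in> span (insert (v,1) G) \<Longrightarrow> h x = a" by blast
  have "h v = 1" using h(3)[of v 1] by (simp add: span_base)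
  moreover have "\<forall>m\<in>M. h m = 0"
  proof
    fix m assume "m \<in> M"
    hence "(m,0) \<in> span (insert (v,1) G)" unfolding G_def by (intro span_base) blast
    thus "h m = 0" using h(3) by blast
  qed
  moreover have "\<bar>h x\<bar> \<le> norm x / infdist v M" for x
  proof -
    have "h (-x) = - h x" using h(1) by (simp add: linear_neg)
    then have "- h x \<le> K * norm x" using h(2)[of "-x"] by simp
    then show ?thesis using h(2)[of x] K_def by (simp add: abs_le_iff)
  qed
  ultimately show ?thesis using h(1) by blast
qed

lemma complex_separation:
  fixes M :: "'a::real_normed_vector set" and J :: "'a \<Rightarrow> 'a"
  assumes sM: "subspace M" and cM: "closed M" and v: "v \<notin> M"
    and J: "linear J" "\<And>x. J (J x) = - x" "\<And>x. norm (J x) \<le> L * norm x" "\<And>m. m \<in> M \<Longrightarrow> J m \<in> M"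
  shows "\<exists>\<phi>::'a \<Rightarrow> complex. linear \<phi> \<and> (\<forall>x. \<phi> (J x) = \<i> * \<phi> x) \<and> Re (\<phi> v) = 1 \<and>
           (\<forall>m\<in>M. \<phi> m = 0) \<and> (\<forall>x. cmod (\<phi> x) \<le> (1 + L) * norm x / infdist v M)"
proof -
  obtain h where h: "linear h" "h v = 1" "\<And>m. m\<in>M \<Longrightarrow> h m = 0" "\<And>x. \<bar>h x\<bar> \<le> norm x / infdist v M"
    using real_separation[OF sM cM v] by blast
  define \<phi> where "\<phi> x = Complex (h x) (- h (J x))" for x
  have hadd: "h (x + y) = h x + h y" and hsc: "h (r *\<^sub>R x) = r * h x" for x y r
    using h(1) by (simp_all add: linear_add linear_scale)
  have Jadd: "J (x + y) = J x + J y" and Jsc: "J (r *\<^sub>R x) = r *\<^sub>R J x" for x y r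
    using J(1) by (simp_all add: linear_add linear_scale)
  have hneg: "h (- x) = - h x" for x using h(1) by (simp add: linear_neg)
  have "linear \<phi>"
  proof (rule linearI)
    fix x y show "\<phi> (x + y) = \<phi> x + \<phi> y" unfolding \<phi>_def by (simp add: hadd Jadd complex_eq_iff)
  next
    fix r :: real and x show "\<phi> (r *\<^sub>R x) = r *\<^sub>R \<phi> x" unfolding \<phi>_def by (simp add: hsc Jsc complex_eq_iff)
  qed
  moreover have "\<phi> (J x) = \<i> * \<phi> x" for x unfolding \<phi>_def by (simp add: J(2) hneg complex_eq_iff)
  moreover have "Re (\<phi> v) = 1" unfolding \<phi>_def using h(2) by simp
  moreover have "\<phi> m = 0" if "m \<in> M" for m unfolding \<phi>_def using h(3) that J(4) by (simp add: complex_eq_iff)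
  moreover have "cmod (\<phi> x) \<le> (1 + L) * norm x / infdist v M" for x
  proof -
    have d: "infdist v M \<ge> 0" by (rule infdist_nonneg)
    have "cmod (\<phi> x) \<le> \<bar>h x\<bar> + \<bar>h (J x)\<bar>" unfolding \<phi>_def using cmod_le[of "Complex (h x) (- h (J x))"] by simp
    also have "\<dots> \<le> norm x / infdist v M + norm (J x) / infdist v M" using h(4) by (intro add_mono) auto
    also have "norm (J x) / infdist v M \<le> L * norm x / infdist v M" using J(3) d by (simp add: divide_right_mono)
    finally show ?thesis by (simp add: algebra_simps add_divide_distrib)
  qed
  ultimately show ?thesis by blast
qed

lemma scaleC_decomp:
  fixes x :: "'a::complex_vector"
  shows "scaleC c x = Re c *\<^sub>R x + Im c *\<^sub>R scaleC \<i> x"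
proof -
  have e: "complex_of_real (Re c) + complex_of_real (Im c) * \<i> = c" by (simp add: complex_eq_iff)
  have "scaleC (complex_of_real (Re c) + complex_of_real (Im c) * \<i>) x =
        scaleC (complex_of_real (Re c)) x + scaleC (complex_of_real (Im c) * \<i>) x"
    by (rule scaleC_add_left)
  also have "\<dots> = Re c *\<^sub>R x + Im c *\<^sub>R scaleC \<i> x"
    by (simp add: scaleR_scaleC scaleC_scaleC)
  finally show ?thesis unfolding e .
qed

lemma scaleC_complex_mult[simp]: "scaleC c (z::complex) = c * z"
  by (simp add: scaleC_complex_def)

lemma clinear_from_linear:
  fixes \<phi> :: "'a::complex_vector \<Rightarrow> complex"
  assumes "linear \<phi>" "\<And>x. \<phi> (scaleC \<i> x) = \<i> * \<phi> x"
  shows "clinear \<phi>"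
  unfolding clinear_def
proof (intro conjI allI)
  fix x y show "\<phi> (x + y) = \<phi> x + \<phi> y" using assms(1) by (simp add: linear_add)
next
  fix c x
  have "\<phi> (scaleC c x) = Re c * \<phi> x + Im c * (\<i> * \<phi> x)"
    using assms unfolding scaleC_decomp[of c x] by (simp add: linear_add linear_scale scaleR_conv_of_real)
  also have "\<dots> = c * \<phi> x"
  proof -
    show ?thesis by (simp add: complex_eq_iff algebra_simps)
  qed
  finally show "\<phi> (scaleC c x) = scaleC c (\<phi> x)" by simp
qed

lemma taylor2_bound:
  fixes h :: "complex \<Rightarrow> complex"
  assumes hol: "h holomorphic_on ball z0 (2*r)" and cont: "continuous_on (cball z0 (2*r)) h"
    and r: "r > 0" and B: "\<And>w. w \<in> cball z0 (2*r) \<Longrightarrow> cmod (h w) \<le> B"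
    and w: "cmod (w - z0) \<le> r"
  shows "cmod (h w - h z0 - (w - z0) * deriv h z0) \<le> B * cmod (w - z0)^2 / r^2"
proof -
  define R where "R = 2 * r"
  have R: "R > 0" using r R_def by simp
  have B0: "B \<ge> 0" using B[of z0] R R_def by (smt (verit) centre_in_cball norm_ge_zero)
  have cauchy: "cmod ((deriv ^^ n) h z0) \<le> fact n * B / R^n" for n
    by (rule Cauchy_inequality) (use hol cont R B in \<open>auto simp: R_def dist_norm\<close>)
  have wb: "w \<in> ball z0 R" using w r R_def by (simp add: dist_norm norm_minus_commute)
  define a where "a n = (deriv ^^ n) h z0 / fact n * (w - z0)^n" for n
  have s: "a sums h w" unfolding a_def using holomorphic_power_series[OF hol[folded R_def] wb] .
  define t where "t = cmod (w - z0) / R"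
  have t0: "t \<ge> 0" and t1: "t \<le> 1/2" using w R r unfolding t_def R_def by (auto simp: divide_simps)
  have abound: "cmod (a n) \<le> B * t^n" for n
  proof -
    have "cmod (a n) = cmod ((deriv ^^ n) h z0) / fact n * cmod (w - z0)^n"
      unfolding a_def by (simp add: norm_mult norm_divide norm_power)
    also have "\<dots> \<le> (fact n * B / R^n) / fact n * cmod (w - z0)^n"
      by (intro mult_right_mono divide_right_mono cauchy) auto
    also have "\<dots> = B * t^n" unfolding t_def by (simp add: power_divide)
    finally show ?thesis .
  qed
  have s2: "(\<lambda>n. a (n + 2)) sums (h w - (\<Sum>i<2. a i))"
    using sums_iff_shift[of a 2 "h w - (\<Sum>i<2. a i)"] s by simp
  have "(\<Sum>i<2. a i) = h z0 + (w - z0) * deriv h z0"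
    unfolding a_def by (simp add: numeral_2_eq_2)
  with s2 have s3: "(\<lambda>n. a (n + 2)) sums (h w - h z0 - (w - z0) * deriv h z0)" by (simp add: algebra_simps)
  have g: "(\<lambda>n. B * t^2 * t^n) sums (B * t^2 * (1 / (1 - t)))"
    by (rule sums_mult, rule geometric_sums) (use t0 t1 in auto)
  have "cmod (h w - h z0 - (w - z0) * deriv h z0) \<le> B * t^2 * (1 / (1 - t))"
  proof (rule norm_sums_le[OF s3 g])
    fix n show "cmod (a (n + 2)) \<le> B * t^2 * t^n" using abound[of "n+2"] by (simp add: power_add power2_eq_square mult_ac)
  qed
  also have "\<dots> \<le> B * t^2 * 2"
  proof -
    have "1 / (1 - t) \<le> 2" using t1 by (simp add: divide_simps)
    thus ?thesis using B0 by (intro mult_left_mono) auto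
  qed
  also have "\<dots> = B * cmod (w - z0)^2 / (2 * r^2)" unfolding t_def R_def by (simp add: power2_eq_square field_simps)
  also have "\<dots> \<le> B * cmod (w - z0)^2 / r^2" using B0 r by (simp add: divide_left_mono)
  finally show ?thesis .
qed

lemma scaleC_neg1: "scaleC (-1) (x::'a::complex_vector) = - x"
proof -
  have "scaleC (-1) x = scaleR (-1) x" by (simp add: scaleR_scaleC)
  thus ?thesis by simp
qed

lemma scaleC_scaleR_comm: "scaleC c (scaleR r (x::'a::complex_vector)) = scaleR r (scaleC c x)"
  by (simp add: scaleR_scaleC scaleC_scaleC mult.commute)

lemma linear_scaleC: "linear (scaleC c :: 'a::complex_vector \<Rightarrow> 'a)"
  by (rule linearI) (simp_all add: scaleC_add_right scaleC_scaleR_comm)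

lemma scaleC_zero_right[simp]: "scaleC c (0::'a::complex_vector) = 0"
  using linear_0[OF linear_scaleC] .

lemma bounded_linear_scaleC: "bounded_linear (scaleC c :: 'a::complex_normed_vector \<Rightarrow> 'a)"
  by (rule bounded_linear_intro[where K="cmod c"]) (simp_all add: scaleC_add_right scaleC_scaleR_comm norm_scaleC mult.commute)

lemma clinear_linear: "clinear f \<Longrightarrow> linear (f :: 'a::complex_vector \<Rightarrow> 'b::complex_vector)"
  unfolding clinear_def by (intro linearI) (simp_all add: scaleR_scaleC)

lemma norming:
  fixes y :: "'a::complex_normed_vector"
  shows "\<exists>\<phi>\<in>cdual TYPE('a). onorm \<phi> \<le> 2 \<and> norm y \<le> cmod (\<phi> y)"
proof (cases "y = 0")
  case True
  have "(\<lambda>x::'a. 0::complex) \<in> cdual TYPE('a)" unfolding cdual_def clinear_def by simp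
  then show ?thesis using True by (intro bexI[of _ "\<lambda>x. 0"]) (simp_all add: onorm_zero)
next
  case False
  have J: "linear (scaleC \<i> :: 'a \<Rightarrow> 'a)" "\<And>x::'a. scaleC \<i> (scaleC \<i> x) = - x"
    "\<And>x::'a. norm (scaleC \<i> x) \<le> 1 * norm x" "\<And>m::'a. m \<in> {0} \<Longrightarrow> scaleC \<i> m \<in> {0}"
    by (simp_all add: linear_scaleC scaleC_scaleC scaleC_neg1 norm_scaleC)
  have "y \<notin> {0}" using False by simp
  from complex_separation[OF subspace_single_0 closed_singleton this J]
  obtain \<phi>0 :: "'a \<Rightarrow> complex" where p: "linear \<phi>0" "\<And>x. \<phi>0 (scaleC \<i> x) = \<i> * \<phi>0 x" "Re (\<phi>0 y) = 1"
    "\<And>x. cmod (\<phi>0 x) \<le> (1 + 1) * norm x / infdist y {0}" by blast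
  have inf: "infdist y {0} = norm y" by (simp add: infdist_singleton dist_norm)
  have ny: "norm y > 0" using False by simp
  define \<phi> where "\<phi> x = complex_of_real (norm y) * \<phi>0 x" for x
  have lin: "linear \<phi>" unfolding \<phi>_def using p(1)
    by (intro linearI) (simp_all add: linear_add linear_scale algebra_simps scaleR_conv_of_real)
  have bd: "cmod (\<phi> x) \<le> 2 * norm x" for x
  proof -
    have "cmod (\<phi> x) = norm y * cmod (\<phi>0 x)" unfolding \<phi>_def by (simp add: norm_mult)
    also have "\<dots> \<le> norm y * (2 * norm x / norm y)" using p(4)[of x] inf ny by (intro mult_left_mono) auto
    also have "\<dots> = 2 * norm x" using ny by simp
    finally show ?thesis .
  qed
  have cl: "clinear \<phi>" by (rule clinear_from_linear[OF lin]) (simp add: \<phi>_def p(2) mult_ac)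
  have bl: "bounded_linear \<phi>"
    using lin bd by (intro bounded_linear_intro[where K=2]) (simp_all add: linear_add linear_scale mult.commute)
  have "onorm \<phi> \<le> 2" by (rule onorm_bound) (use bd in auto)
  moreover have "norm y \<le> cmod (\<phi> y)"
  proof -
    have "1 \<le> cmod (\<phi>0 y)" using abs_Re_le_cmod[of "\<phi>0 y"] p(3) by simp
    hence "norm y * 1 \<le> norm y * cmod (\<phi>0 y)" using ny by (intro mult_left_mono) auto
    thus ?thesis unfolding \<phi>_def by (simp add: norm_mult)
  qed
  ultimately show ?thesis using cl bl unfolding cdual_def by blast
qed

lemma cdual_sep:
  fixes y1 y2 :: "'a::complex_normed_vector"
  assumes "\<And>\<phi>. \<phi> \<in> cdual TYPE('a) \<Longrightarrow> \<phi> y1 = \<phi> y2"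
  shows "y1 = y2"
proof -
  obtain \<phi> where p: "\<phi> \<in> cdual TYPE('a)" "norm (y1 - y2) \<le> cmod (\<phi> (y1 - y2))" using norming by blast
  have "\<phi> (y1 - y2) = \<phi> y1 - \<phi> y2" using p(1) unfolding cdual_def by (auto intro: linear_diff clinear_linear)
  then have "norm (y1 - y2) \<le> 0" using p assms[OF p(1)] by simp
  thus ?thesis by simp
qed

lemma cscale_apply: "blinfun_apply (cscale_blinfun c T) x = scaleC c (blinfun_apply T x)"
proof -
  have "bounded_linear (\<lambda>x. scaleC c (blinfun_apply T x))"
    by (rule bounded_linear_compose[OF bounded_linear_scaleC blinfun.bounded_linear_right])
  thus ?thesis unfolding cscale_blinfun_def by (simp add: bounded_linear_Blinfun_apply)
qed

lemma cdual_add: "\<phi> \<in> cdual T \<Longrightarrow> \<phi> (a + b) = \<phi> a + \<phi> b"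
  unfolding cdual_def clinear_def by blast
lemma cdual_scale: "\<phi> \<in> cdual T \<Longrightarrow> \<phi> (scaleC c a) = c * \<phi> a"
  unfolding cdual_def clinear_def by simp
lemma cdual_diff: "\<phi> \<in> cdual T \<Longrightarrow> \<phi> (a - b) = \<phi> a - \<phi> b"
  unfolding cdual_def by (auto intro: linear_diff clinear_linear)
lemma cdual_bound: "\<phi> \<in> cdual T \<Longrightarrow> cmod (\<phi> a) \<le> onorm \<phi> * norm a"
  unfolding cdual_def by (auto intro: onorm)
lemma cdual_onorm_nn: "\<phi> \<in> cdual T \<Longrightarrow> 0 \<le> onorm \<phi>"
  unfolding cdual_def by (auto intro: onorm_pos_le)

lemma strong_hol:
  fixes g :: "complex \<Rightarrow> ('a::complex_normed_vector \<Rightarrow>\<^sub>L 'b::complex_normed_vector)"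
  assumes refl: "creflexive TYPE('b)" and U: "open U" and B: "B \<ge> 0" "\<And>z. z\<in>U \<Longrightarrow> norm (g z) \<le> B"
    and gl: "\<And>z. z\<in>U \<Longrightarrow> clinear (blinfun_apply (g z))"
    and wh: "\<And>\<phi> x. \<phi> \<in> cdual TYPE('b) \<Longrightarrow> (\<lambda>z. \<phi> (blinfun_apply (g z) x)) holomorphic_on U"
  shows "op_holomorphic_on g U"
  unfolding op_holomorphic_on_def
proof
  fix z0 assume z0: "z0 \<in> U"
  obtain e where e: "e > 0" "cball z0 e \<subseteq> U" using U z0 open_contains_cball by blast
  define r where "r = e / 2"
  have r: "r > 0" "cball z0 (2*r) \<subseteq> U" using e r_def by auto
  let ?CD = "cdual TYPE('b)"
  have holb: "(\<lambda>z. \<phi> (blinfun_apply (g z) x)) holomorphic_on ball z0 (2*r)" if "\<phi> \<in> ?CD" for \<phi> x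
    using holomorphic_on_subset[OF wh[OF that] order_trans[OF ball_subset_cball r(2)]] .
  have contb: "continuous_on (cball z0 (2*r)) (\<lambda>z. \<phi> (blinfun_apply (g z) x))" if "\<phi> \<in> ?CD" for \<phi> x
    using holomorphic_on_imp_continuous_on[OF holomorphic_on_subset[OF wh[OF that] r(2)]] .
  have diff: "(\<lambda>z. \<phi> (blinfun_apply (g z) x)) field_differentiable at z0" if "\<phi> \<in> ?CD" for \<phi> x
    using holomorphic_on_imp_differentiable_at[OF wh[OF that] U z0] .
  have hb: "cmod (\<phi> (blinfun_apply (g w) x)) \<le> onorm \<phi> * B * norm x" if "\<phi> \<in> ?CD" "w \<in> U" for \<phi> x w
  proof -
    have "cmod (\<phi> (blinfun_apply (g w) x)) \<le> onorm \<phi> * norm (blinfun_apply (g w) x)" by (rule cdual_bound[OF that(1)])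
    also have "\<dots> \<le> onorm \<phi> * (B * norm x)"
    proof (rule mult_left_mono[OF _ cdual_onorm_nn[OF that(1)]])
      have "norm (g w) * norm x \<le> B * norm x" using B(2)[OF that(2)] by (simp add: mult_right_mono)
      then show "norm (blinfun_apply (g w) x) \<le> B * norm x" using norm_blinfun[of "g w" x] by linarith
    qed
    finally show ?thesis by (simp add: mult_ac)
  qed
  have dbound: "cmod (deriv (\<lambda>z. \<phi> (blinfun_apply (g z) x)) z0) \<le> onorm \<phi> * B * norm x / (2*r)" if "\<phi> \<in> ?CD" for \<phi> x
  proof -
    have "cmod ((deriv ^^ 1) (\<lambda>z. \<phi> (blinfun_apply (g z) x)) z0) \<le> fact 1 * (onorm \<phi> * B * norm x) / (2*r)^1"
      by (rule Cauchy_inequality[OF holb[OF that] contb[OF that]]) (use r in \<open>auto intro!: hb that simp: dist_norm\<close>)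
    thus ?thesis by simp
  qed
  have Dex: "\<exists>y. \<forall>\<phi>\<in>?CD. deriv (\<lambda>z. \<phi> (blinfun_apply (g z) x)) z0 = \<phi> y" for x
  proof -
    have "(\<forall>\<phi>\<in>?CD. \<forall>\<psi>\<in>?CD. deriv (\<lambda>z. (\<lambda>y. \<phi> y + \<psi> y) (blinfun_apply (g z) x)) z0
             = deriv (\<lambda>z. \<phi> (blinfun_apply (g z) x)) z0 + deriv (\<lambda>z. \<psi> (blinfun_apply (g z) x)) z0) \<and>
          (\<forall>\<phi>\<in>?CD. \<forall>c. deriv (\<lambda>z. (\<lambda>y. c * \<phi> y) (blinfun_apply (g z) x)) z0 = c * deriv (\<lambda>z. \<phi> (blinfun_apply (g z) x)) z0) \<and>
          (\<exists>K. \<forall>\<phi>\<in>?CD. cmod (deriv (\<lambda>z. \<phi> (blinfun_apply (g z) x)) z0) \<le> K * onorm \<phi>)"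
    proof (intro conjI ballI allI)
      fix \<phi> \<psi> assume "\<phi> \<in> ?CD" "\<psi> \<in> ?CD"
      then show "deriv (\<lambda>z. (\<lambda>y. \<phi> y + \<psi> y) (blinfun_apply (g z) x)) z0
             = deriv (\<lambda>z. \<phi> (blinfun_apply (g z) x)) z0 + deriv (\<lambda>z. \<psi> (blinfun_apply (g z) x)) z0"
        using deriv_add[OF diff diff] by simp
    next
      fix \<phi> c assume "\<phi> \<in> ?CD"
      then show "deriv (\<lambda>z. (\<lambda>y. c * \<phi> y) (blinfun_apply (g z) x)) z0 = c * deriv (\<lambda>z. \<phi> (blinfun_apply (g z) x)) z0"
        using deriv_cmult[OF diff] by simp
    next
      show "\<exists>K. \<forall>\<phi>\<in>?CD. cmod (deriv (\<lambda>z. \<phi> (blinfun_apply (g z) x)) z0) \<le> K * onorm \<phi>"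
        using dbound r by (intro exI[of _ "B * norm x / (2*r)"]) (auto simp: field_simps)
    qed
    then show ?thesis using refl unfolding creflexive_def
      by (rule_tac mp[OF spec[OF refl[unfolded creflexive_def], of "\<lambda>\<phi>. deriv (\<lambda>z. \<phi> (blinfun_apply (g z) x)) z0"]]) simp
  qed
  define Df where "Df x = (SOME y. \<forall>\<phi>\<in>?CD. deriv (\<lambda>z. \<phi> (blinfun_apply (g z) x)) z0 = \<phi> y)" for x
  have Df: "\<phi> (Df x) = deriv (\<lambda>z. \<phi> (blinfun_apply (g z) x)) z0" if "\<phi> \<in> ?CD" for \<phi> x
  proof -
    have "\<forall>\<phi>\<in>?CD. deriv (\<lambda>z. \<phi> (blinfun_apply (g z) x)) z0 = \<phi> (Df x)"
      unfolding Df_def by (rule someI_ex[OF Dex])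
    with that have "deriv (\<lambda>z. \<phi> (blinfun_apply (g z) x)) z0 = \<phi> (Df x)" by blast
    thus ?thesis by simp
  qed
  have Df_add: "Df (x1 + x2) = Df x1 + Df x2" for x1 x2
  proof (rule cdual_sep)
    fix \<phi> :: "'b \<Rightarrow> complex" assume p: "\<phi> \<in> ?CD"
    have "(\<lambda>z. \<phi> (blinfun_apply (g z) (x1 + x2))) = (\<lambda>z. \<phi> (blinfun_apply (g z) x1) + \<phi> (blinfun_apply (g z) x2))"
      using p by (simp add: blinfun.add_right cdual_add)
    then show "\<phi> (Df (x1 + x2)) = \<phi> (Df x1 + Df x2)"
      using p by (simp add: Df cdual_add deriv_add[OF diff diff])
  qed
  have Df_scale: "Df (scaleC c x) = scaleC c (Df x)" for c x
  proof (rule cdual_sep)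
    fix \<phi> :: "'b \<Rightarrow> complex" assume p: "\<phi> \<in> ?CD"
    have ev: "eventually (\<lambda>z. \<phi> (blinfun_apply (g z) (scaleC c x)) = c * \<phi> (blinfun_apply (g z) x)) (nhds z0)"
    proof -
      have "eventually (\<lambda>z. z \<in> U) (nhds z0)" using U z0 by (rule eventually_nhds_in_open)
      then show ?thesis
        by eventually_elim (use gl p in \<open>simp add: clinear_def cdual_scale\<close>)
    qed
    have "deriv (\<lambda>z. \<phi> (blinfun_apply (g z) (scaleC c x))) z0 = deriv (\<lambda>z. c * \<phi> (blinfun_apply (g z) x)) z0"
      by (rule deriv_cong_ev[OF ev HOL.refl])
    then show "\<phi> (Df (scaleC c x)) = \<phi> (scaleC c (Df x))"
      using p by (simp add: Df cdual_scale deriv_cmult[OF diff])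
  qed
  have Df_bound: "norm (Df x) \<le> norm x * (B / r)" for x
  proof -
    obtain \<phi> where p: "\<phi> \<in> ?CD" "onorm \<phi> \<le> 2" "norm (Df x) \<le> cmod (\<phi> (Df x))" using norming by blast
    have "norm (Df x) \<le> onorm \<phi> * B * norm x / (2*r)" using p(3) dbound[OF p(1), of x] Df[OF p(1)] by simp
    also have "\<dots> \<le> 2 * B * norm x / (2*r)" using p(2) B r
      by (intro divide_right_mono mult_right_mono) auto
    finally show ?thesis by (simp add: field_simps)
  qed
  have blD: "bounded_linear Df"
    by (rule bounded_linear_intro[OF Df_add _ Df_bound]) (simp add: scaleR_scaleC Df_scale)
  define D where "D = Blinfun Df"
  have Dapp: "blinfun_apply D = Df" unfolding D_def using blD by (rule bounded_linear_Blinfun_apply)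
  have clD: "clinear (blinfun_apply D)" unfolding Dapp clinear_def using Df_add Df_scale by blast
  have est: "norm (g w - g z0 - cscale_blinfun (w - z0) D) \<le> 2 * B / r^2 * cmod (w - z0)^2"
    if w: "cmod (w - z0) \<le> r" for w
  proof (rule norm_blinfun_bound)
    show "0 \<le> 2 * B / r^2 * cmod (w - z0)^2" using B by simp
    fix x
    let ?v = "blinfun_apply (g w - g z0 - cscale_blinfun (w - z0) D) x"
    have v: "?v = blinfun_apply (g w) x - blinfun_apply (g z0) x - scaleC (w - z0) (Df x)"
      by (simp add: blinfun.diff_left cscale_apply Dapp)
    obtain \<phi> where p: "\<phi> \<in> ?CD" "onorm \<phi> \<le> 2" "norm ?v \<le> cmod (\<phi> ?v)" using norming by blast
    define h where "h z = \<phi> (blinfun_apply (g z) x)" for z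
    have eqv: "\<phi> ?v = h w - h z0 - (w - z0) * deriv h z0"
      unfolding v h_def using p(1) by (simp add: cdual_diff cdual_scale Df)
    have tb: "cmod (h w - h z0 - (w - z0) * deriv h z0) \<le> (2 * B * norm x) * cmod (w - z0)^2 / r^2"
    proof (rule taylor2_bound[OF _ _ r(1) _ w])
      show "h holomorphic_on ball z0 (2*r)" unfolding h_def using holb[OF p(1)] .
      show "continuous_on (cball z0 (2*r)) h" unfolding h_def using contb[OF p(1)] .
      fix w' assume "w' \<in> cball z0 (2*r)"
      then have "w' \<in> U" using r by blast
      then have "cmod (h w') \<le> onorm \<phi> * B * norm x" unfolding h_def by (rule hb[OF p(1)])
      also have "\<dots> \<le> 2 * B * norm x" using p(2) B by (intro mult_right_mono) auto
      finally show "cmod (h w') \<le> 2 * B * norm x" .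
    qed
    have "norm ?v \<le> (2 * B * norm x) * cmod (w - z0)^2 / r^2"
      using order_trans[OF p(3) tb[folded eqv]] .
    also have "\<dots> = 2 * B / r^2 * cmod (w - z0)^2 * norm x" by (simp add: field_simps)
    finally show "norm ?v \<le> 2 * B / r^2 * cmod (w - z0)^2 * norm x" .
  qed
  show "\<exists>D. clinear (blinfun_apply D) \<and>
        ((\<lambda>w. norm (g w - g z0 - cscale_blinfun (w - z0) D) / cmod (w - z0)) \<longlongrightarrow> 0) (at z0)"
  proof (intro exI conjI)
    show "clinear (blinfun_apply D)" by (rule clD)
    show "((\<lambda>w. norm (g w - g z0 - cscale_blinfun (w - z0) D) / cmod (w - z0)) \<longlongrightarrow> 0) (at z0)"
    proof (rule Lim_null_comparison)
      show "\<forall>\<^sub>F w in at z0. norm (norm (g w - g z0 - cscale_blinfun (w - z0) D) / cmod (w - z0)) \<le> 2 * B / r^2 * cmod (w - z0)"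
      proof (rule eventually_mono[OF eventually_at_ball'[OF r(1), of z0 UNIV]])
        fix w assume "w \<in> ball z0 r \<and> w \<noteq> z0 \<and> w \<in> UNIV"
        then have w: "w \<noteq> z0" "cmod (w - z0) \<le> r" by (auto simp: dist_norm norm_minus_commute)
        have "norm (g w - g z0 - cscale_blinfun (w - z0) D) / cmod (w - z0) \<le> 2 * B / r^2 * cmod (w - z0)^2 / cmod (w - z0)"
          using est[OF w(2)] by (intro divide_right_mono) auto
        also have "\<dots> = 2 * B / r^2 * cmod (w - z0)" using w(1) by (simp add: power2_eq_square)
        finally show "norm (norm (g w - g z0 - cscale_blinfun (w - z0) D) / cmod (w - z0)) \<le> 2 * B / r^2 * cmod (w - z0)"
          by simp
      qed
      show "((\<lambda>w. 2 * B / r^2 * cmod (w - z0)) \<longlongrightarrow> 0) (at z0)"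
      proof -
        have "((\<lambda>w. w - z0) \<longlongrightarrow> z0 - z0) (at z0)" by (intro tendsto_diff tendsto_ident_at tendsto_const)
        then have "((\<lambda>w. w - z0) \<longlongrightarrow> 0) (at z0)" by simp
        then show ?thesis by (intro tendsto_mult_right_zero tendsto_mult_left_zero tendsto_norm_zero)
      qed
    qed
  qed
qed

lemma closure_subspace_inv:
  fixes S :: "'a::real_normed_vector set"
  assumes sS: "subspace S" and T: "bounded_linear T" and TS: "\<And>x. x \<in> S \<Longrightarrow> T x \<in> S"
  shows "subspace (closure S)" "\<And>x. x \<in> closure S \<Longrightarrow> T x \<in> closure S"
proof -
  show "subspace (closure S)" unfolding subspace_def
  proof (intro conjI ballI allI)
    show "0 \<in> closure S" using subspace_0[OF sS] closure_subset by blast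
  next
    fix x y assume "x \<in> closure S" "y \<in> closure S"
    then obtain f g where f: "\<And>n. f n \<in> S" "f \<longlonglongrightarrow> x" and g: "\<And>n. g n \<in> S" "g \<longlonglongrightarrow> y"
      unfolding closure_sequential by blast
    have "(\<lambda>n. f n + g n) \<longlonglongrightarrow> x + y" by (intro tendsto_add f g)
    moreover have "\<And>n. f n + g n \<in> S" using subspace_add[OF sS f(1) g(1)] .
    ultimately show "x + y \<in> closure S" unfolding closure_sequential by (intro exI[of _ "\<lambda>n. f n + g n"]) blast
  next
    fix c :: real and x assume "x \<in> closure S"
    then obtain f where f: "\<And>n. f n \<in> S" "f \<longlonglongrightarrow> x" unfolding closure_sequential by blast
    have "(\<lambda>n. c *\<^sub>R f n) \<longlonglongrightarrow> c *\<^sub>R x" by (intro tendsto_scaleR tendsto_const f)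
    moreover have "\<And>n. c *\<^sub>R f n \<in> S" using subspace_scale[OF sS f(1)] .
    ultimately show "c *\<^sub>R x \<in> closure S" unfolding closure_sequential by (intro exI[of _ "\<lambda>n. c *\<^sub>R f n"]) blast
  qed
  fix x assume "x \<in> closure S"
  then obtain f where f: "\<And>n. f n \<in> S" "f \<longlonglongrightarrow> x" unfolding closure_sequential by blast
  have "(\<lambda>n. T (f n)) \<longlonglongrightarrow> T x" using bounded_linear.tendsto[OF T f(2)] .
  moreover have "\<And>n. T (f n) \<in> S" using TS f(1) by blast
  ultimately show "T x \<in> closure S" unfolding closure_sequential by (intro exI[of _ "\<lambda>n. T (f n)"]) blast
qed

lemma cdual_bl: "\<phi> \<in> cdual T \<Longrightarrow> bounded_linear \<phi>" unfolding cdual_def by blast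
lemma cdual_cl: "\<phi> \<in> cdual T \<Longrightarrow> clinear \<phi>" unfolding cdual_def by blast
lemma cdual_Blinfun: "\<phi> \<in> cdual T \<Longrightarrow> blinfun_apply (Blinfun \<phi>) = \<phi>"
  by (rule bounded_linear_Blinfun_apply[OF cdual_bl])

lemma clinear_zero: "clinear f \<Longrightarrow> f 0 = 0"
  using clinear_linear linear_0 by blast

lemma cdual_I:
  fixes \<phi> :: "'a::complex_normed_vector \<Rightarrow> complex"
  assumes "linear \<phi>" "\<And>x. \<phi> (scaleC \<i> x) = \<i> * \<phi> x" "\<And>x. cmod (\<phi> x) \<le> K * norm x"
  shows "\<phi> \<in> cdual TYPE('a)"
  unfolding cdual_def using assms clinear_from_linear[OF assms(1,2)]
  by (auto intro!: bounded_linear_intro[where K=K] simp: linear_add linear_scale mult.commute)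

definition Jb :: "('a::real_normed_vector \<Rightarrow>\<^sub>L complex) \<Rightarrow> ('a \<Rightarrow>\<^sub>L complex)" where
  "Jb \<phi> = Blinfun (\<lambda>y. \<i> * blinfun_apply \<phi> y)"

lemma Jb_apply: "blinfun_apply (Jb \<phi>) y = \<i> * blinfun_apply \<phi> y"
proof -
  have "bounded_linear (\<lambda>y. \<i> * blinfun_apply \<phi> y)"
    by (rule bounded_linear_compose[OF bounded_linear_mult_right blinfun.bounded_linear_right])
  thus ?thesis unfolding Jb_def by (simp add: bounded_linear_Blinfun_apply)
qed

lemma Jb_props:
  "linear Jb" "\<And>x. Jb (Jb x) = - x" "\<And>x. norm (Jb x) \<le> 1 * norm x" "bounded_linear Jb"
proof -
  show lin: "linear Jb"
    by (rule linearI; rule blinfun_eqI) (simp_all add: Jb_apply blinfun.add_left blinfun.scaleR_left algebra_simps)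
  show "Jb (Jb x) = - x" for x by (rule blinfun_eqI) (simp add: Jb_apply blinfun.minus_left)
  show nb: "norm (Jb x) \<le> 1 * norm x" for x
    by (simp, rule norm_blinfun_bound) (simp_all add: Jb_apply norm_mult norm_blinfun)
  show "bounded_linear Jb" using lin nb
    by (intro bounded_linear_intro[where K=1]) (simp_all add: linear_add[OF lin] linear_scale[OF lin])
qed

lemma zC: "(\<lambda>x. 0) \<in> cdual T" unfolding cdual_def clinear_def by simp
lemma addC: "(\<lambda>y. \<phi> y + \<phi>' y) \<in> cdual T" if "\<phi> \<in> cdual T" "\<phi>' \<in> cdual T" 
  using that unfolding cdual_def clinear_def by (auto intro: bounded_linear_add simp: algebra_simps)
lemma mulC: "(\<lambda>y. c * \<phi> y) \<in> cdual T" if "\<phi> \<in> cdual T"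
  using that unfolding cdual_def clinear_def
  by (auto intro: bounded_linear_compose[OF bounded_linear_mult_right] simp: algebra_simps)
lemma Badd: "Blinfun (\<lambda>y. \<phi> y + \<phi>' y) = Blinfun \<phi> + Blinfun \<phi>'" if "\<phi> \<in> cdual T" "\<phi>' \<in> cdual T" 
  by (rule blinfun_eqI) (simp add: cdual_Blinfun[OF addC[OF that]] cdual_Blinfun[OF that(1)] cdual_Blinfun[OF that(2)] blinfun.add_left)
lemma Bmul: "Blinfun (\<lambda>y. c * \<phi> y) = Re c *\<^sub>R Blinfun \<phi> + Im c *\<^sub>R Jb (Blinfun \<phi>)" if "\<phi> \<in> cdual T"
proof (rule blinfun_eqI)
  fix y
  have "c * \<phi> y = Re c *\<^sub>R \<phi> y + Im c *\<^sub>R (\<i> * \<phi> y)" by (simp add: complex_eq_iff)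
  then show "blinfun_apply (Blinfun (\<lambda>y. c * \<phi> y)) y = blinfun_apply (Re c *\<^sub>R Blinfun \<phi> + Im c *\<^sub>R Jb (Blinfun \<phi>)) y"
    by (simp add: cdual_Blinfun[OF mulC[OF that]] cdual_Blinfun[OF that] blinfun.add_left blinfun.scaleR_left Jb_apply)
qed
lemma Bsub: "Blinfun \<phi> - Blinfun \<phi>' = Blinfun (\<lambda>y. \<phi> y - \<phi>' y)" if "\<phi> \<in> cdual T" "\<phi>' \<in> cdual T" 
proof -
  have m: "(\<lambda>y. - \<phi>' y) \<in> cdual T" using mulC[OF that(2), of "-1"] by simp
  have "Blinfun (\<lambda>y. \<phi> y - \<phi>' y) = Blinfun (\<lambda>y. \<phi> y + - \<phi>' y)" by simp
  also have "\<dots> = Blinfun \<phi> + Blinfun (\<lambda>y. - \<phi>' y)" by (rule Badd[OF that(1) m])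
  also have "Blinfun (\<lambda>y. - \<phi>' y) = - Blinfun \<phi>'"
    by (rule blinfun_eqI) (simp add: cdual_Blinfun[OF m] cdual_Blinfun[OF that(2)] blinfun.minus_left)
  finally show ?thesis by simp
qed

lemma density:
  fixes jY1 :: "'y1::complex_banach \<Rightarrow> 'w::{complex_vector,t2_space}"
    and jY2 :: "'y2::complex_banach \<Rightarrow> 'w"
  assumes i1: "continuous_inclusion jY1" and i2: "continuous_inclusion jY2"
    and hrefl: "creflexive TYPE('y2)" and \<psi>: "\<psi> \<in> cdual TYPE('y2)" and e: "\<epsilon> > 0"
  shows "\<exists>\<psi>'\<in>cdual TYPE('y2). (\<exists>\<theta>\<in>cdual TYPE('y1). \<forall>a b. jY1 a = jY2 b \<longrightarrow> \<psi>' b = \<theta> a)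
           \<and> onorm (\<lambda>y. \<psi>' y - \<psi> y) < \<epsilon>"
proof -
  let ?C2 = "cdual TYPE('y2)" and ?C1 = "cdual TYPE('y1)"
  define S where "S = {\<psi>'\<in>?C2. \<exists>\<theta>\<in>?C1. \<forall>a b. jY1 a = jY2 b \<longrightarrow> \<psi>' b = \<theta> a}"
  define S' where "S' = Blinfun ` S"
  have SC: "S \<subseteq> ?C2" unfolding S_def by blast
  have sS': "subspace S'" unfolding subspace_def
  proof (intro conjI ballI allI)
    have "(\<lambda>x. 0) \<in> S" unfolding S_def by (intro CollectI conjI bexI[of _ "\<lambda>x. 0"] zC allI impI) simp_all
    moreover have "Blinfun (\<lambda>x. 0) = 0" by (rule blinfun_eqI) (simp add: bounded_linear_Blinfun_apply[OF bounded_linear_zero])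
    ultimately show "0 \<in> S'" unfolding S'_def by (metis image_eqI)
  next
    fix p q assume "p \<in> S'" "q \<in> S'"
    then obtain \<phi> \<phi>' where pq: "\<phi> \<in> S" "\<phi>' \<in> S" "p = Blinfun \<phi>" "q = Blinfun \<phi>'" unfolding S'_def by blast
    from pq(1,2) obtain \<theta> \<theta>' where th: "\<theta> \<in> ?C1" "\<theta>' \<in> ?C1" "\<forall>a b. jY1 a = jY2 b \<longrightarrow> \<phi> b = \<theta> a"
      "\<forall>a b. jY1 a = jY2 b \<longrightarrow> \<phi>' b = \<theta>' a" unfolding S_def by blast
    have c2: "\<phi> \<in> ?C2" "\<phi>' \<in> ?C2" using pq SC by auto
    have "(\<lambda>y. \<phi> y + \<phi>' y) \<in> S" unfolding S_def
      using addC[OF c2] addC[OF th(1,2)] th by (intro CollectI conjI bexI[of _ "\<lambda>y. \<theta> y + \<theta>' y"]) auto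
    moreover have "p + q = Blinfun (\<lambda>y. \<phi> y + \<phi>' y)" using Badd[OF c2] pq by auto
    ultimately show "p + q \<in> S'" unfolding S'_def by blast
  next
    fix c :: real and p assume "p \<in> S'"
    then obtain \<phi> where pq: "\<phi> \<in> S" "p = Blinfun \<phi>" unfolding S'_def by blast
    from pq(1) obtain \<theta> where th: "\<theta> \<in> ?C1" "\<forall>a b. jY1 a = jY2 b \<longrightarrow> \<phi> b = \<theta> a" unfolding S_def by blast
    have c2: "\<phi> \<in> ?C2" using pq SC by auto
    have "(\<lambda>y. of_real c * \<phi> y) \<in> S" unfolding S_def
      using mulC[OF c2] mulC[OF th(1)] th by (intro CollectI conjI bexI[of _ "\<lambda>y. of_real c * \<theta> y"]) auto
    moreover have "c *\<^sub>R p = Blinfun (\<lambda>y. of_real c * \<phi> y)" using Bmul[OF c2, of "of_real c"] pq by auto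
    ultimately show "c *\<^sub>R p \<in> S'" unfolding S'_def by blast
  qed
  have JS': "Jb p \<in> S'" if pS: "p \<in> S'" for p
  proof -
    obtain \<phi> where pq: "\<phi> \<in> S" "p = Blinfun \<phi>" using pS unfolding S'_def by blast
    from pq(1) obtain \<theta> where th: "\<theta> \<in> ?C1" "\<forall>a b. jY1 a = jY2 b \<longrightarrow> \<phi> b = \<theta> a" unfolding S_def by blast
    have c2: "\<phi> \<in> ?C2" using pq SC by auto
    have "(\<lambda>y. \<i> * \<phi> y) \<in> S" unfolding S_def
      using mulC[OF c2] mulC[OF th(1)] th by (intro CollectI conjI bexI[of _ "\<lambda>y. \<i> * \<theta> y"]) auto
    moreover have "Jb p = Blinfun (\<lambda>y. \<i> * \<phi> y)" using Bmul[OF c2, of "\<i>"] pq by auto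
    ultimately show ?thesis unfolding S'_def by blast
  qed
  define M where "M = closure S'"
  have sM: "subspace M" and JM: "\<And>m. m \<in> M \<Longrightarrow> Jb m \<in> M"
    using closure_subspace_inv[OF sS' Jb_props(4) JS'] unfolding M_def by auto
  have "Blinfun \<psi> \<in> M"
  proof (rule ccontr)
    assume nM: "Blinfun \<psi> \<notin> M"
    have cM: "closed M" unfolding M_def by simp
    from complex_separation[OF sM cM nM Jb_props(1,2,3) JM]
    obtain \<Lambda> :: "('y2 \<Rightarrow>\<^sub>L complex) \<Rightarrow> complex" where L: "linear \<Lambda>" "\<And>x. \<Lambda> (Jb x) = \<i> * \<Lambda> x"
      "Re (\<Lambda> (Blinfun \<psi>)) = 1" "\<And>m. m\<in>M \<Longrightarrow> \<Lambda> m = 0"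
      "\<And>x. cmod (\<Lambda> x) \<le> (1 + 1) * norm x / infdist (Blinfun \<psi>) M"
      by blast
    define K where "K = (1 + 1) / infdist (Blinfun \<psi>) M"
    have Lb: "cmod (\<Lambda> x) \<le> K * norm x" for x using L(5)[of x] unfolding K_def by simp
    have "\<exists>y. \<forall>\<phi>\<in>?C2. \<Lambda> (Blinfun \<phi>) = \<phi> y"
    proof (rule mp[OF spec[OF hrefl[unfolded creflexive_def], of "\<lambda>\<phi>. \<Lambda> (Blinfun \<phi>)"]], intro conjI ballI allI)
      fix \<phi> \<phi>' assume pp: "\<phi> \<in> ?C2" "\<phi>' \<in> ?C2"
      show "\<Lambda> (Blinfun (\<lambda>y. \<phi> y + \<phi>' y)) = \<Lambda> (Blinfun \<phi>) + \<Lambda> (Blinfun \<phi>')"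
        unfolding Badd[OF pp] using L(1) by (simp add: linear_add)
    next
      fix \<phi> c assume pp: "\<phi> \<in> ?C2"
      have "\<Lambda> (Blinfun (\<lambda>y. c * \<phi> y)) = Re c * \<Lambda> (Blinfun \<phi>) + Im c * (\<i> * \<Lambda> (Blinfun \<phi>))"
        unfolding Bmul[OF pp] using L(1,2) by (simp add: linear_add linear_scale scaleR_conv_of_real)
      also have "\<dots> = c * \<Lambda> (Blinfun \<phi>)" by (simp add: complex_eq_iff algebra_simps)
      finally show "\<Lambda> (Blinfun (\<lambda>y. c * \<phi> y)) = c * \<Lambda> (Blinfun \<phi>)" .
    next
      show "\<exists>K. \<forall>\<phi>\<in>?C2. cmod (\<Lambda> (Blinfun \<phi>)) \<le> K * onorm \<phi>"
      proof (intro exI ballI)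
        fix \<phi> assume p: "\<phi> \<in> ?C2"
        have "norm (Blinfun \<phi>) = onorm \<phi>" by (simp add: norm_blinfun.rep_eq cdual_Blinfun[OF p])
        then show "cmod (\<Lambda> (Blinfun \<phi>)) \<le> K * onorm \<phi>" using Lb[of "Blinfun \<phi>"] by simp
      qed
    qed
    then obtain y where y: "\<And>\<phi>. \<phi> \<in> ?C2 \<Longrightarrow> \<Lambda> (Blinfun \<phi>) = \<phi> y" by blast
    have Sy: "\<phi> y = 0" if "\<phi> \<in> S" for \<phi>
    proof -
      have "Blinfun \<phi> \<in> S'" unfolding S'_def using that by (rule imageI)
      then have "Blinfun \<phi> \<in> M" unfolding M_def using closure_subset by blast
      moreover have "\<phi> \<in> ?C2" using SC that by blast
      ultimately show ?thesis using y[of \<phi>] L(4)[of "Blinfun \<phi>"] by simp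
    qed
    have "Re (\<psi> y) = 1" using y[OF \<psi>] L(3) by simp
    hence y0: "y \<noteq> 0" using clinear_zero[OF cdual_cl[OF \<psi>]] by (metis zero_complex.sel(1) zero_neq_one)
    have j1: "clinear jY1" "inj jY1" "continuous_on UNIV jY1" and j2: "clinear jY2" "inj jY2" "continuous_on UNIV jY2"
      using i1 i2 unfolding continuous_inclusion_def by auto
    have lj1: "linear jY1" and lj2: "linear jY2" using j1(1) j2(1) by (auto intro: clinear_linear)
    define N where "N = {p::'y1 \<times> 'y2. jY1 (fst p) = jY2 (snd p)}"
    have cN: "closed N" unfolding N_def
    proof (rule closed_Collect_eq)
      show "continuous_on UNIV (\<lambda>x::'y1\<times>'y2. jY1 (fst x))"
        by (rule continuous_on_compose2[OF j1(3) continuous_on_fst[OF continuous_on_id]]) simp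
      show "continuous_on UNIV (\<lambda>x::'y1\<times>'y2. jY2 (snd x))"
        by (rule continuous_on_compose2[OF j2(3) continuous_on_snd[OF continuous_on_id]]) simp
    qed
    have sN: "subspace N" unfolding N_def subspace_def
    proof (intro conjI ballI allI)
      show "0 \<in> {p::'y1 \<times> 'y2. jY1 (fst p) = jY2 (snd p)}" using linear_0[OF lj1] linear_0[OF lj2] by simp
    next
      fix p q :: "'y1 \<times> 'y2" assume "p \<in> {p. jY1 (fst p) = jY2 (snd p)}" "q \<in> {p. jY1 (fst p) = jY2 (snd p)}"
      then show "p + q \<in> {p. jY1 (fst p) = jY2 (snd p)}" using linear_add[OF lj1] linear_add[OF lj2] by simp
    next
      fix c :: real and p :: "'y1 \<times> 'y2" assume "p \<in> {p. jY1 (fst p) = jY2 (snd p)}"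
      then show "c *\<^sub>R p \<in> {p. jY1 (fst p) = jY2 (snd p)}" using linear_scale[OF lj1] linear_scale[OF lj2] by simp
    qed
    define J2 where "J2 p = (scaleC \<i> (fst p), scaleC \<i> (snd p))" for p :: "'y1 \<times> 'y2"
    have J2: "linear J2" "\<And>x. J2 (J2 x) = - x" "\<And>x. norm (J2 x) \<le> 1 * norm x" "\<And>m. m \<in> N \<Longrightarrow> J2 m \<in> N"
    proof -
      show "linear J2" unfolding J2_def by (rule linearI) (simp_all add: scaleC_add_right scaleC_scaleR_comm)
      show "J2 (J2 x) = - x" for x unfolding J2_def by (simp add: scaleC_scaleC scaleC_neg1 prod_eq_iff)
      show "norm (J2 x) \<le> 1 * norm x" for x unfolding J2_def by (cases x) (simp add: norm_Pair norm_scaleC)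
      show "J2 m \<in> N" if "m \<in> N" for m using that j1(1) j2(1) unfolding J2_def N_def clinear_def by simp
    qed
    have nN: "(0, y) \<notin> N"
    proof
      assume "(0, y) \<in> N"
      then have "jY2 y = jY2 0" unfolding N_def using clinear_zero[OF j1(1)] clinear_zero[OF j2(1)] by simp
      then show False using j2(2) y0 unfolding inj_def by blast
    qed
    from complex_separation[OF sN cN nN J2]
    obtain Xf :: "'y1 \<times> 'y2 \<Rightarrow> complex" where X: "linear Xf" "\<And>x. Xf (J2 x) = \<i> * Xf x"
      "Re (Xf (0, y)) = 1" "\<And>m. m\<in>N \<Longrightarrow> Xf m = 0" "\<And>x. cmod (Xf x) \<le> (1 + 1) * norm x / infdist (0, y) N"
      by blast
    define K2 where "K2 = (1 + 1) / infdist (0::'y1, y) N"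
    have Xb: "cmod (Xf x) \<le> K2 * norm x" for x using X(5)[of x] unfolding K2_def by simp
    have Xadd: "Xf (p + q) = Xf p + Xf q" and Xsc: "Xf (r *\<^sub>R p) = r *\<^sub>R Xf p" for p q r
      using X(1) by (simp_all add: linear_add linear_scale)
    define \<psi>0 where "\<psi>0 b = Xf (0, b)" for b
    define \<theta>0 where "\<theta>0 a = - Xf (a, 0)" for a
    have p0: "\<psi>0 \<in> ?C2"
    proof (rule cdual_I[where K=K2])
      show "linear \<psi>0" unfolding \<psi>0_def
      proof (rule linearI)
        fix a b :: 'y2 show "Xf (0, a + b) = Xf (0, a) + Xf (0, b)" using Xadd[of "(0,a)" "(0,b)"] by simp
        fix r :: real show "Xf (0, r *\<^sub>R a) = r *\<^sub>R Xf (0, a)" using Xsc[of r "(0,a)"] by simp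
      qed
      show "\<psi>0 (scaleC \<i> x) = \<i> * \<psi>0 x" for x using X(2)[of "(0,x)"] unfolding \<psi>0_def J2_def by simp
      show "cmod (\<psi>0 x) \<le> K2 * norm x" for x using Xb[of "(0,x)"] unfolding \<psi>0_def by (simp add: norm_Pair)
    qed
    have t0: "\<theta>0 \<in> ?C1"
    proof (rule cdual_I[where K=K2])
      show "linear \<theta>0" unfolding \<theta>0_def
      proof (rule linearI)
        fix a b :: 'y1 show "- Xf (a + b, 0) = - Xf (a, 0) + - Xf (b, 0)" using Xadd[of "(a,0)" "(b,0)"] by simp
        fix r :: real show "- Xf (r *\<^sub>R a, 0) = r *\<^sub>R - Xf (a, 0)" using Xsc[of r "(a,0)"] by simp
      qed
      show "\<theta>0 (scaleC \<i> x) = \<i> * \<theta>0 x" for x using X(2)[of "(x,0)"] unfolding \<theta>0_def J2_def by simp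
      show "cmod (\<theta>0 x) \<le> K2 * norm x" for x using Xb[of "(x,0)"] unfolding \<theta>0_def by (simp add: norm_Pair)
    qed
    have "\<psi>0 b = \<theta>0 a" if "jY1 a = jY2 b" for a b
    proof -
      have "Xf (a, b) = 0" using X(4) that unfolding N_def by simp
      moreover have "Xf (a, b) = Xf (a, 0) + Xf (0, b)" using Xadd[of "(a,0)" "(0,b)"] by simp
      ultimately show ?thesis unfolding \<psi>0_def \<theta>0_def by (simp add: eq_neg_iff_add_eq_0 add.commute)
    qed
    then have "\<psi>0 \<in> S" unfolding S_def using p0 t0 by blast
    then have "\<psi>0 y = 0" by (rule Sy)
    moreover have "Re (\<psi>0 y) = 1" unfolding \<psi>0_def by (rule X(3))
    ultimately show False by simp
  qed
  then obtain p where p: "p \<in> S'" "dist p (Blinfun \<psi>) < \<epsilon>" unfolding M_def closure_approachable using e by blast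
  then obtain \<psi>' where q: "\<psi>' \<in> S" "p = Blinfun \<psi>'" unfolding S'_def by blast
  have c2: "\<psi>' \<in> ?C2" using q SC by auto
  have "dist p (Blinfun \<psi>) = norm (Blinfun (\<lambda>y. \<psi>' y - \<psi> y))"
    unfolding dist_norm q(2) Bsub[OF c2 \<psi>] ..
  also have "\<dots> = onorm (\<lambda>y. \<psi>' y - \<psi> y)"
    unfolding norm_blinfun.rep_eq
    by (subst bounded_linear_Blinfun_apply) (auto intro: bounded_linear_sub cdual_bl c2 \<psi>)
  finally have "dist p (Blinfun \<psi>) = onorm (\<lambda>y. \<psi>' y - \<psi> y)" .
  then show ?thesis using p q unfolding S_def by auto
qed

lemma extend_dense:
  fixes T :: "'a::complex_normed_vector \<Rightarrow> 'b::complex_banach" and D :: "'a set"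
  assumes dense: "closure D = UNIV"
    and Dadd: "\<And>x y. x \<in> D \<Longrightarrow> y \<in> D \<Longrightarrow> x + y \<in> D"
    and Dsc: "\<And>c x. x \<in> D \<Longrightarrow> scaleC c x \<in> D"
    and Tadd: "\<And>x y. x \<in> D \<Longrightarrow> y \<in> D \<Longrightarrow> T (x + y) = T x + T y"
    and Tsc: "\<And>c x. x \<in> D \<Longrightarrow> T (scaleC c x) = scaleC c (T x)"
    and Tb: "\<And>x. x \<in> D \<Longrightarrow> norm (T x) \<le> C * norm x" and C: "C \<ge> 0"
  shows "\<exists>G. bounded_linear G \<and> clinear G \<and> (\<forall>x\<in>D. G x = T x) \<and> (\<forall>x. norm (G x) \<le> C * norm x)"
proof -
  have Tdiff: "T (x - y) = T x - T y" if "x \<in> D" "y \<in> D" for x y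
  proof -
    have my: "- y \<in> D" using Dsc[OF that(2), of "-1"] by (simp add: scaleC_neg1)
    have "T (- y) = - T y" using Tsc[OF that(2), of "-1"] by (simp add: scaleC_neg1)
    then show ?thesis using Tadd[OF that(1) my] by simp
  qed
  have conv: "convergent (\<lambda>n. T (u n))" if u: "\<And>n. u n \<in> D" "u \<longlonglongrightarrow> x" for u x
  proof -
    have cu: "Cauchy u" using u(2) by (rule LIMSEQ_imp_Cauchy)
    have "Cauchy (\<lambda>n. T (u n))" unfolding Cauchy_iff
    proof (intro allI impI)
      fix e :: real assume e: "e > 0"
      have eC: "e / (C + 1) > 0" using e C by simp
      obtain M where M: "\<And>m n. m \<ge> M \<Longrightarrow> n \<ge> M \<Longrightarrow> norm (u m - u n) < e / (C + 1)"
        using cu eC unfolding Cauchy_iff by blast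
      show "\<exists>M. \<forall>m\<ge>M. \<forall>n\<ge>M. norm (T (u m) - T (u n)) < e"
      proof (intro exI allI impI)
        fix m n assume mn: "m \<ge> M" "n \<ge> M"
        have "norm (T (u m) - T (u n)) = norm (T (u m - u n))" using Tdiff u(1) by simp
        also have "\<dots> \<le> C * norm (u m - u n)" using Tb Dadd Dsc u(1) Tdiff
          by (metis diff_conv_add_uminus scaleC_neg1)
        also have "\<dots> \<le> (C + 1) * norm (u m - u n)" by (simp add: mult_right_mono)
        also have "\<dots> < (C + 1) * (e / (C + 1))" using M[OF mn] C by (intro mult_strict_left_mono) auto
        also have "\<dots> = e" using C by simp
        finally show "norm (T (u m) - T (u n)) < e" .
      qed
    qed
    then show ?thesis by (simp add: Cauchy_convergent_iff)
  qed
  have same: "(\<lambda>n. T (u n) - T (v n)) \<longlonglongrightarrow> 0"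
    if u: "\<And>n. u n \<in> D" "u \<longlonglongrightarrow> x" and v: "\<And>n. v n \<in> D" "v \<longlonglongrightarrow> x" for u v x
  proof (rule Lim_null_comparison)
    show "\<forall>\<^sub>F n in sequentially. norm (T (u n) - T (v n)) \<le> C * norm (u n - v n)"
      using Tb Tdiff u(1) v(1) by (intro always_eventually allI) (metis Dadd Dsc diff_conv_add_uminus scaleC_neg1)
    have "(\<lambda>n. u n - v n) \<longlonglongrightarrow> x - x" by (intro tendsto_diff u(2) v(2))
    then have "(\<lambda>n. norm (u n - v n)) \<longlonglongrightarrow> 0" using tendsto_norm_zero by fastforce
    then show "(\<lambda>n. C * norm (u n - v n)) \<longlonglongrightarrow> 0" using tendsto_mult_right_zero tendsto_mult_left_zero by blast
  qed
  have seqex: "\<exists>u. (\<forall>n. u n \<in> D) \<and> u \<longlonglongrightarrow> x" for x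
    using closure_sequential[of x D] dense by simp
  define s where "s x = (SOME u. (\<forall>n. u n \<in> D) \<and> u \<longlonglongrightarrow> x)" for x
  have s: "\<And>n. s x n \<in> D" "s x \<longlonglongrightarrow> x" for x using someI_ex[OF seqex[of x]] unfolding s_def by auto
  define G where "G x = lim (\<lambda>n. T (s x n))" for x
  have Gs: "(\<lambda>n. T (s x n)) \<longlonglongrightarrow> G x" for x unfolding G_def using conv[OF s] by (simp add: convergent_LIMSEQ_iff)
  have key: "(\<lambda>n. T (u n)) \<longlonglongrightarrow> G x" if u: "\<And>n. u n \<in> D" "u \<longlonglongrightarrow> x" for u x
  proof -
    have "(\<lambda>n. (T (u n) - T (s x n)) + T (s x n)) \<longlonglongrightarrow> 0 + G x"
      by (intro tendsto_add same[OF u s] Gs)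
    then show ?thesis by simp
  qed
  have Gadd: "G (x + y) = G x + G y" for x y
  proof -
    have "(\<lambda>n. T (s x n + s y n)) \<longlonglongrightarrow> G (x + y)"
      by (rule key) (auto intro: Dadd s tendsto_add)
    moreover have "(\<lambda>n. T (s x n + s y n)) \<longlonglongrightarrow> G x + G y"
      using tendsto_add[OF Gs Gs] by (simp add: Tadd s)
    ultimately show ?thesis by (rule LIMSEQ_unique)
  qed
  have Gsc: "G (scaleC c x) = scaleC c (G x)" for c x
  proof -
    have "(\<lambda>n. T (scaleC c (s x n))) \<longlonglongrightarrow> G (scaleC c x)"
      by (rule key) (auto intro: Dsc s bounded_linear.tendsto[OF bounded_linear_scaleC])
    moreover have "(\<lambda>n. T (scaleC c (s x n))) \<longlonglongrightarrow> scaleC c (G x)"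
      using bounded_linear.tendsto[OF bounded_linear_scaleC Gs] by (simp add: Tsc s)
    ultimately show ?thesis by (rule LIMSEQ_unique)
  qed
  have GD: "G x = T x" if "x \<in> D" for x
  proof -
    have "(\<lambda>n. T x) \<longlonglongrightarrow> G x" using key[of "\<lambda>n. x" x] that by simp
    then show ?thesis by (simp add: LIMSEQ_const_iff)
  qed
  have Gb: "norm (G x) \<le> C * norm x" for x
  proof (rule LIMSEQ_le)
    show "(\<lambda>n. norm (T (s x n))) \<longlonglongrightarrow> norm (G x)" by (intro tendsto_norm Gs)
    show "(\<lambda>n. C * norm (s x n)) \<longlonglongrightarrow> C * norm x" by (intro tendsto_mult tendsto_const tendsto_norm s)
    show "\<exists>N. \<forall>n\<ge>N. norm (T (s x n)) \<le> C * norm (s x n)" using Tb s by blast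
  qed
  have "bounded_linear G"
    by (rule bounded_linear_intro[where K=C]) (simp_all add: Gadd Gsc scaleR_scaleC Gb mult.commute)
  moreover have "clinear G" unfolding clinear_def using Gadd Gsc by blast
  ultimately show ?thesis using GD Gb by blast
qed

lemma op_hol_comp:
  fixes f :: "complex \<Rightarrow> ('a::complex_normed_vector \<Rightarrow>\<^sub>L 'b::complex_normed_vector)"
  assumes hol: "op_holomorphic_on f U" and \<theta>: "\<theta> \<in> cdual TYPE('b)"
  shows "(\<lambda>z. \<theta> (blinfun_apply (f z) a)) holomorphic_on U"
  unfolding holomorphic_on_def
proof
  fix z assume z: "z \<in> U"
  obtain D where D: "((\<lambda>w. norm (f w - f z - cscale_blinfun (w - z) D) / cmod (w - z)) \<longlongrightarrow> 0) (at z)"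
    using hol z unfolding op_holomorphic_on_def by blast
  let ?h = "\<lambda>w. \<theta> (blinfun_apply (f w) a)"
  have "(?h has_field_derivative \<theta> (blinfun_apply D a)) (at z)"
    unfolding has_field_derivative_iff
  proof (rule Lim_transform[of "\<lambda>w. \<theta> (blinfun_apply D a)"])
    show "((\<lambda>w. \<theta> (blinfun_apply D a)) \<longlongrightarrow> \<theta> (blinfun_apply D a)) (at z)" by simp
    show "((\<lambda>w. (?h w - ?h z) / (w - z) - \<theta> (blinfun_apply D a)) \<longlongrightarrow> 0) (at z)"
    proof (rule Lim_null_comparison)
      show "\<forall>\<^sub>F w in at z. norm ((?h w - ?h z) / (w - z) - \<theta> (blinfun_apply D a))
              \<le> onorm \<theta> * norm a * (norm (f w - f z - cscale_blinfun (w - z) D) / cmod (w - z))"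
      proof (rule eventually_mono[OF eventually_at_ball'[OF zero_less_one, of z UNIV]])
        fix w assume "w \<in> ball z 1 \<and> w \<noteq> z \<and> w \<in> UNIV"
        then have wz: "w - z \<noteq> 0" by simp
        have eq: "(?h w - ?h z) / (w - z) - \<theta> (blinfun_apply D a)
              = \<theta> (blinfun_apply (f w - f z - cscale_blinfun (w - z) D) a) / (w - z)"
          using wz \<theta> by (simp add: blinfun.diff_left blinfun.add_left cscale_apply cdual_diff cdual_add cdual_scale field_simps)
        have "cmod (\<theta> (blinfun_apply (f w - f z - cscale_blinfun (w - z) D) a))
              \<le> onorm \<theta> * norm (blinfun_apply (f w - f z - cscale_blinfun (w - z) D) a)"
          by (rule cdual_bound[OF \<theta>])
        also have "\<dots> \<le> onorm \<theta> * (norm (f w - f z - cscale_blinfun (w - z) D) * norm a)"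
          by (intro mult_left_mono norm_blinfun cdual_onorm_nn[OF \<theta>])
        finally show "norm ((?h w - ?h z) / (w - z) - \<theta> (blinfun_apply D a))
              \<le> onorm \<theta> * norm a * (norm (f w - f z - cscale_blinfun (w - z) D) / cmod (w - z))"
          unfolding eq using wz by (simp add: norm_divide divide_right_mono field_simps)
      qed
      show "((\<lambda>w. onorm \<theta> * norm a * (norm (f w - f z - cscale_blinfun (w - z) D) / cmod (w - z))) \<longlongrightarrow> 0) (at z)"
        using tendsto_mult_right_zero[OF D] tendsto_mult_left_zero[OF D] by blast
    qed
  qed
  then show "?h field_differentiable at z within U"
    unfolding field_differentiable_def by (blast intro: has_field_derivative_at_within)
qed

theorem lemma10p1:
  fixes jX1 :: "'x1::complex_banach \<Rightarrow> 'v::{complex_vector,t2_space}"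
    and jX2 :: "'x2::complex_banach \<Rightarrow> 'v"
    and jY1 :: "'y1::complex_banach \<Rightarrow> 'w::{complex_vector,t2_space}"
    and jY2 :: "'y2::complex_banach \<Rightarrow> 'w"
    and f :: "complex \<Rightarrow> ('x1 \<Rightarrow>\<^sub>L 'y1)"
    and U :: "complex set"
    and C :: real
  assumes tvs: "complex_tvs TYPE('v)" "complex_tvs TYPE('w)"
    and incl: "continuous_inclusion jX1" "continuous_inclusion jX2"
      "continuous_inclusion jY1" "continuous_inclusion jY2"
    and denseX1: "closure {a. jX1 a \<in> range jX2} = UNIV"
    and denseX2: "closure {b. jX2 b \<in> range jX1} = UNIV"
    and denseY1: "closure {a. jY1 a \<in> range jY2} = UNIV"
    and denseY2: "closure {b. jY2 b \<in> range jY1} = UNIV"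
    and refl: "creflexive TYPE('y2)"
    and O_open: "open U"
    and f_lin: "\<forall>z\<in>U. clinear (blinfun_apply (f z))"
    and f_hol: "op_holomorphic_on f U"
    and bound: "\<forall>z\<in>U. \<forall>a b. jX1 a = jX2 b \<longrightarrow>
                  (\<exists>c. jY1 (blinfun_apply (f z) a) = jY2 c \<and> norm c \<le> C * norm b)"
  shows "\<exists>g :: complex \<Rightarrow> ('x2 \<Rightarrow>\<^sub>L 'y2).
           (\<forall>z\<in>U. clinear (blinfun_apply (g z)) \<and>
              (\<forall>a b. jX1 a = jX2 b \<longrightarrow> jY2 (blinfun_apply (g z) b) = jY1 (blinfun_apply (f z) a)))
           \<and> op_holomorphic_on g U"
proof -
  have jx1: "clinear jX1" "inj jX1" and jx2: "clinear jX2" "inj jX2"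
    and jy1: "clinear jY1" "inj jY1" and jy2: "clinear jY2" "inj jY2"
    using incl unfolding continuous_inclusion_def by auto
  have cadd: "j (x + y) = j x + j y" if "clinear j" for j :: "'q::complex_vector \<Rightarrow> 'r::complex_vector" and x y
    using that unfolding clinear_def by blast
  have csc: "j (scaleC c x) = scaleC c (j x)" if "clinear j" for j :: "'q::complex_vector \<Rightarrow> 'r::complex_vector" and c x
    using that unfolding clinear_def by blast
  define C' where "C' = max C 0"
  have C': "C' \<ge> 0" "C \<le> C'" unfolding C'_def by auto
  define D where "D = {b. jX2 b \<in> range jX1}"
  define T where "T z b = (THE c. \<exists>a. jX1 a = jX2 b \<and> jY1 (blinfun_apply (f z) a) = jY2 c)" for z b
  have Tp: "jY1 (blinfun_apply (f z) a) = jY2 (T z b) \<and> norm (T z b) \<le> C' * norm b"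
    if z: "z \<in> U" and ab: "jX1 a = jX2 b" for z a b
  proof -
    obtain c where c: "jY1 (blinfun_apply (f z) a) = jY2 c" "norm c \<le> C * norm b" using bound z ab by blast
    have "T z b = c" unfolding T_def
    proof (rule the_equality)
      show "\<exists>a. jX1 a = jX2 b \<and> jY1 (blinfun_apply (f z) a) = jY2 c" using ab c by blast
      fix c' assume "\<exists>a. jX1 a = jX2 b \<and> jY1 (blinfun_apply (f z) a) = jY2 c'"
      then obtain a' where a': "jX1 a' = jX2 b" "jY1 (blinfun_apply (f z) a') = jY2 c'" by blast
      have "a' = a" using a'(1) ab jx1(2) unfolding inj_def by metis
      then have "jY2 c' = jY2 c" using a'(2) c(1) by simp
      then show "c' = c" using jy2(2) unfolding inj_def by blast
    qed
    moreover have "C * norm b \<le> C' * norm b" using C' by (simp add: mult_right_mono)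
    ultimately show ?thesis using c by simp
  qed
  have Dadd: "x + y \<in> D" if xyD: "x \<in> D" "y \<in> D" for x y
  proof -
    obtain a1 a2 where "jX2 x = jX1 a1" "jX2 y = jX1 a2" using xyD unfolding D_def by blast
    then have "jX2 (x + y) = jX1 (a1 + a2)" using cadd[OF jx1(1)] cadd[OF jx2(1)] by simp
    then show ?thesis unfolding D_def by blast
  qed
  have Dsc: "scaleC c x \<in> D" if xD: "x \<in> D" for c x
  proof -
    obtain a where "jX2 x = jX1 a" using xD unfolding D_def by blast
    then have "jX2 (scaleC c x) = jX1 (scaleC c a)" using csc[OF jx1(1)] csc[OF jx2(1)] by simp
    then show ?thesis unfolding D_def by blast
  qed
  have ext: "\<exists>G. bounded_linear G \<and> clinear G \<and> (\<forall>x\<in>D. G x = T z x) \<and> (\<forall>x. norm (G x) \<le> C' * norm x)"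
    if z: "z \<in> U" for z
  proof (rule extend_dense[OF _ Dadd Dsc _ _ _ C'(1)])
    show "closure D = UNIV" unfolding D_def by (rule denseX2)
  next
    fix x y assume xy: "x \<in> D" "y \<in> D"
    obtain a1 a2 where a: "jX1 a1 = jX2 x" "jX1 a2 = jX2 y" using xy unfolding D_def by force
    have s: "jX1 (a1 + a2) = jX2 (x + y)" using a cadd[OF jx1(1)] cadd[OF jx2(1)] by simp
    have "jY2 (T z (x + y)) = jY1 (blinfun_apply (f z) (a1 + a2))" using Tp[OF z s] by simp
    also have "\<dots> = jY1 (blinfun_apply (f z) a1) + jY1 (blinfun_apply (f z) a2)"
      by (simp add: blinfun.add_right cadd[OF jy1(1)])
    also have "\<dots> = jY2 (T z x + T z y)" using Tp[OF z a(1)] Tp[OF z a(2)] cadd[OF jy2(1)] by simp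
    finally show "T z (x + y) = T z x + T z y" using jy2(2) unfolding inj_def by blast
  next
    fix c x assume xD: "x \<in> D"
    obtain a where a: "jX1 a = jX2 x" using xD unfolding D_def by force
    have s: "jX1 (scaleC c a) = jX2 (scaleC c x)" using a csc[OF jx1(1)] csc[OF jx2(1)] by simp
    have fl: "clinear (blinfun_apply (f z))" using f_lin z by blast
    have "jY2 (T z (scaleC c x)) = jY1 (blinfun_apply (f z) (scaleC c a))" using Tp[OF z s] by simp
    also have "\<dots> = scaleC c (jY1 (blinfun_apply (f z) a))" by (simp add: csc[OF fl] csc[OF jy1(1)])
    also have "\<dots> = jY2 (scaleC c (T z x))" using Tp[OF z a] csc[OF jy2(1)] by simp
    finally show "T z (scaleC c x) = scaleC c (T z x)" using jy2(2) unfolding inj_def by blast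
  next
    fix x assume xD: "x \<in> D"
    obtain a where a: "jX1 a = jX2 x" using xD unfolding D_def by force
    show "norm (T z x) \<le> C' * norm x" using Tp[OF z a] by simp
  qed
  define P where "P z G \<longleftrightarrow> bounded_linear G \<and> clinear G \<and> (\<forall>x\<in>D. G x = T z x) \<and> (\<forall>x. norm (G x) \<le> C' * norm x)"
    for z and G :: "'x2 \<Rightarrow> 'y2"
  define g where "g z = (if z \<in> U then Blinfun (SOME G. P z G) else 0)" for z
  have gp: "clinear (blinfun_apply (g z)) \<and> (\<forall>x\<in>D. blinfun_apply (g z) x = T z x) \<and> norm (g z) \<le> C'"
    if z: "z \<in> U" for z
  proof -
    have PS: "P z (SOME G. P z G)" using ext[OF z] unfolding P_def[abs_def] by (rule someI_ex)
    have blS: "bounded_linear (SOME G. P z G)" using PS unfolding P_def by blast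
    have ga: "blinfun_apply (g z) = (SOME G. P z G)" unfolding g_def using z bounded_linear_Blinfun_apply[OF blS]
      by simp
    have "norm (g z) \<le> C'" by (rule norm_blinfun_bound[OF C'(1)]) (use PS in \<open>simp add: ga P_def\<close>)
    then show ?thesis using PS unfolding ga P_def by blast
  qed
  have gb: "norm (blinfun_apply (g z) x) \<le> C' * norm x" if "z \<in> U" for z x
  proof -
    have "norm (blinfun_apply (g z) x) \<le> norm (g z) * norm x" by (rule norm_blinfun)
    also have "\<dots> \<le> C' * norm x" using gp[OF that] by (simp add: mult_right_mono)
    finally show ?thesis .
  qed
  have main1: "\<forall>z\<in>U. clinear (blinfun_apply (g z)) \<and>
              (\<forall>a b. jX1 a = jX2 b \<longrightarrow> jY2 (blinfun_apply (g z) b) = jY1 (blinfun_apply (f z) a))"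
  proof (intro ballI conjI allI impI)
    fix z assume z: "z \<in> U"
    show "clinear (blinfun_apply (g z))" using gp[OF z] by blast
    fix a b assume ab: "jX1 a = jX2 b"
    then have "b \<in> D" unfolding D_def by (metis rangeI mem_Collect_eq)
    then show "jY2 (blinfun_apply (g z) b) = jY1 (blinfun_apply (f z) a)" using gp[OF z] Tp[OF z ab] by simp
  qed
  have weak: "(\<lambda>z. \<psi> (blinfun_apply (g z) x)) holomorphic_on U" if \<psi>: "\<psi> \<in> cdual TYPE('y2)" for \<psi> x
  proof -
    have "x \<in> closure D" unfolding D_def denseX2 by simp
    then obtain s where s: "\<And>n. s n \<in> D" "s \<longlonglongrightarrow> x" unfolding closure_sequential by blast
    define Q where "Q n \<psi>' \<longleftrightarrow> \<psi>' \<in> cdual TYPE('y2) \<and> (\<exists>\<theta>\<in>cdual TYPE('y1). \<forall>a b. jY1 a = jY2 b \<longrightarrow> \<psi>' b = \<theta> a)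
           \<and> onorm (\<lambda>y. \<psi>' y - \<psi> y) < 1 / real (Suc n)" for n \<psi>'
    define ps where "ps n = (SOME \<psi>'. Q n \<psi>')" for n
    have ps: "Q n (ps n)" for n
    proof -
      have "\<exists>\<psi>'. Q n \<psi>'" unfolding Q_def using density[OF incl(3) incl(4) refl \<psi>, of "1 / real (Suc n)"] by auto
      then show ?thesis unfolding ps_def by (rule someI_ex)
    qed
    have holn: "(\<lambda>z. ps n (blinfun_apply (g z) (s n))) holomorphic_on U" for n
    proof -
      obtain \<theta> where th: "\<theta> \<in> cdual TYPE('y1)" "\<And>a b. jY1 a = jY2 b \<Longrightarrow> ps n b = \<theta> a"
        using ps[of n] unfolding Q_def by blast
      obtain a where a: "jX1 a = jX2 (s n)" using s(1)[of n] unfolding D_def by force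
      have "(\<lambda>z. \<theta> (blinfun_apply (f z) a)) holomorphic_on U" by (rule op_hol_comp[OF f_hol th(1)])
      moreover have "ps n (blinfun_apply (g z) (s n)) = \<theta> (blinfun_apply (f z) a)" if z: "z \<in> U" for z
      proof -
        have "blinfun_apply (g z) (s n) = T z (s n)" using gp[OF z] s(1) by blast
        moreover have "jY1 (blinfun_apply (f z) a) = jY2 (T z (s n))" using Tp[OF z a] by blast
        ultimately show ?thesis using th(2) by simp
      qed
      ultimately show ?thesis by (subst holomorphic_cong[OF HOL.refl]) auto
    qed
    define bnd where "bnd n = 1 / real (Suc n) * C' * norm (s n) + onorm \<psi> * C' * norm (s n - x)" for n
    have bnd0: "bnd \<longlonglongrightarrow> 0"
    proof -
      have "(\<lambda>n. 1 / real (Suc n)) \<longlonglongrightarrow> 0" using LIMSEQ_inverse_real_of_nat by (simp add: inverse_eq_divide)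
      then have t1: "(\<lambda>n. 1 / real (Suc n) * C' * norm (s n)) \<longlonglongrightarrow> 0 * C' * norm x"
        by (intro tendsto_mult tendsto_const tendsto_norm s(2))
      have "(\<lambda>n. s n - x) \<longlonglongrightarrow> x - x" by (intro tendsto_diff s(2) tendsto_const)
      then have t2: "(\<lambda>n. onorm \<psi> * C' * norm (s n - x)) \<longlonglongrightarrow> onorm \<psi> * C' * norm (x - x)"
        by (intro tendsto_mult tendsto_const tendsto_norm)
      show ?thesis unfolding bnd_def using tendsto_add[OF t1 t2] by simp
    qed
    have est: "dist (ps n (blinfun_apply (g z) (s n))) (\<psi> (blinfun_apply (g z) x)) \<le> bnd n" if z: "z \<in> U" for n z
    proof -
      have q: "ps n \<in> cdual TYPE('y2)" "onorm (\<lambda>y. ps n y - \<psi> y) < 1 / real (Suc n)" using ps[of n] unfolding Q_def by auto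
      have bl: "bounded_linear (\<lambda>y. ps n y - \<psi> y)" using q(1) \<psi> by (intro bounded_linear_sub cdual_bl)
      let ?y = "blinfun_apply (g z) (s n)"
      have eq: "ps n ?y - \<psi> (blinfun_apply (g z) x) = (ps n ?y - \<psi> ?y) + \<psi> (blinfun_apply (g z) (s n - x))"
        using \<psi> by (simp add: blinfun.diff_right cdual_diff)
      have "dist (ps n ?y) (\<psi> (blinfun_apply (g z) x)) \<le> cmod (ps n ?y - \<psi> ?y) + cmod (\<psi> (blinfun_apply (g z) (s n - x)))"
        unfolding dist_norm eq by (rule norm_triangle_ineq)
      also have "cmod (ps n ?y - \<psi> ?y) \<le> 1 / real (Suc n) * C' * norm (s n)"
      proof -
        have "cmod (ps n ?y - \<psi> ?y) \<le> onorm (\<lambda>y. ps n y - \<psi> y) * norm ?y" using onorm[OF bl] by simp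
        also have "\<dots> \<le> 1 / real (Suc n) * (C' * norm (s n))"
          using q(2) gb[OF z] onorm_pos_le[OF bl] by (intro mult_mono) auto
        finally show ?thesis by simp
      qed
      also have "cmod (\<psi> (blinfun_apply (g z) (s n - x))) \<le> onorm \<psi> * C' * norm (s n - x)"
      proof -
        have "cmod (\<psi> (blinfun_apply (g z) (s n - x))) \<le> onorm \<psi> * norm (blinfun_apply (g z) (s n - x))"
          by (rule cdual_bound[OF \<psi>])
        also have "\<dots> \<le> onorm \<psi> * (C' * norm (s n - x))"
          by (intro mult_left_mono gb[OF z] cdual_onorm_nn[OF \<psi>])
        finally show ?thesis by simp
      qed
      finally show ?thesis unfolding bnd_def by simp
    qed
    show ?thesis
    proof (rule holomorphic_uniform_sequence[OF O_open holn])
      fix w assume w: "w \<in> U"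
      obtain d where d: "d > 0" "cball w d \<subseteq> U" using O_open w open_contains_cball by blast
      have "uniform_limit (cball w d) (\<lambda>n z. ps n (blinfun_apply (g z) (s n))) (\<lambda>z. \<psi> (blinfun_apply (g z) x)) sequentially"
        unfolding uniform_limit_iff
      proof (intro allI impI)
        fix e :: real assume e: "e > 0"
        have "eventually (\<lambda>n. bnd n < e) sequentially" using order_tendstoD(2)[OF bnd0 e] .
        then show "\<forall>\<^sub>F n in sequentially. \<forall>z\<in>cball w d. dist (ps n (blinfun_apply (g z) (s n))) (\<psi> (blinfun_apply (g z) x)) < e"
        proof (rule eventually_mono)
          fix n assume "bnd n < e"
          then show "\<forall>z\<in>cball w d. dist (ps n (blinfun_apply (g z) (s n))) (\<psi> (blinfun_apply (g z) x)) < e"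
            using est d(2) by (meson order_le_less_trans subsetD)
        qed
      qed
      then show "\<exists>d>0. cball w d \<subseteq> U \<and> uniform_limit (cball w d) (\<lambda>n z. ps n (blinfun_apply (g z) (s n))) (\<lambda>z. \<psi> (blinfun_apply (g z) x)) sequentially"
        using d by blast
    qed
  qed
  have "op_holomorphic_on g U"
  proof (rule strong_hol[OF refl O_open C'(1)])
    show "\<And>z. z \<in> U \<Longrightarrow> norm (g z) \<le> C'" using gp by blast
    show "\<And>z. z \<in> U \<Longrightarrow> clinear (blinfun_apply (g z))" using gp by blast
    show "\<And>\<phi> x. \<phi> \<in> cdual TYPE('y2) \<Longrightarrow> (\<lambda>z. \<phi> (blinfun_apply (g z) x)) holomorphic_on U" by (rule weak)
  qed
  then show ?thesis using main1 by blast
qed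

end
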